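(* There is a constant $C_6>0$ depending only on $d,s,\alpha,\Lambda$ such that for every non-trivial $\Lambda$-good measure $\mu$ (and any admissible choice of $B',\eta$ in the definition of $\widetilde T_{\mu,\delta}(1)$), every $\delta>0$ and all $x,x'\in\mathbb{R}^d$, $$|\widetilde T_{\mu,\delta}(1)(x)-\widetilde T_{\mu,\delta}(1)(x')|\le\frac{C_6|x-x'|^\alpha}{\delta^\alpha}\max\Bigl(1,\frac{|x-x'|}{\delta}\Bigr)^{1-\alpha}.$$
   Context: Fix $d\ge2$, $d'\ge1$, $s\in(0,d)$, $\alpha\in(0,1]$; $\Omega:\mathbb{R}^d\to\mathbb{C}^{d'}$ with $\Omega(\lambda x)=\lambda\Omega(x)$ for $\lambda\in\mathbb{R}$, $|\Omega|\le1$ and $|\Omega(x)-\Omega(x')|\le|x-x'|^\alpha$ on the unit sphere, $\Omega$ odd; $K(x)=\Omega(x)/|x|^{s+1}$, $K_\delta(x)=\Omega(x)/\max(\delta,|x|)^{s+1}$. Measures are nonnegative locally finite Borel measures; $\langle f,g\rangle_\mu=\int f\cdot g\,d\mu$. $\mu$ is $\Lambda$-nice if $\mu(B(x,r))\le\Lambda r^s$ for all balls; $T_{\mu,\delta}f(x)=\int K_\delta(x-y)f(y)d\mu(y)$; $\mu$ is $\Lambda$-good if $\Lambda$-nice and $\|T_{\mu,\delta}\|_{L^2(\mu)\to L^2(\mu)}\le\Lambda$ for all $\delta$, and $T_\mu$ is the bounded operator with $\langle T_\mu f,g\rangle_\mu=\lim_{\delta\to0}\langle T_{\mu,\delta}f,g\rangle_\mu$.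 For non-trivial $\Lambda$-good $\mu$: fix a ball $B'$ with $\mu(B')>0$ and nonnegative Lipschitz $\eta$ compactly supported in $B'$ with $\int\eta d\mu=1$; for $x\in\mathbb{R}^d$, $\delta>0$, pick a ball $B$ containing $x$ and $B'$ and compactly supported $\varphi\in L^2(\mu)$ with $\varphi\equiv1$ on $2B$, $0\le\varphi\le1$, and set $\widetilde T_{\mu,\delta}(1)(x)=T_{\mu,\delta}(\varphi)(x)-\int\eta\,T_\mu(\varphi)d\mu+\int(1-\varphi(y))\int\eta(z)[K_\delta(x-y)-K(z-y)]d\mu(z)d\mu(y)$ (independent of $B,\varphi$). *)

theory Defs
  imports "HOL-Analysis.Analysis"
begin

definition omega_adm :: "real \<Rightarrow> (real^'n \<Rightarrow> complex^'m) \<Rightarrow> bool" where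
  "omega_adm \<alpha> \<Omega> \<longleftrightarrow>
     (\<forall>c::real. \<forall>x. \<Omega> (c *\<^sub>R x) = c *\<^sub>R \<Omega> x) \<and>
     (\<forall>x. \<Omega> (- x) = - \<Omega> x) \<and>
     (\<forall>x. norm x = 1 \<longrightarrow> norm (\<Omega> x) \<le> 1) \<and>
     (\<forall>x y. norm x = 1 \<longrightarrow> norm y = 1 \<longrightarrow> norm (\<Omega> x - \<Omega> y) \<le> norm (x - y) powr \<alpha>)"

definition Ker :: "(real^'n \<Rightarrow> complex^'m) \<Rightarrow> real \<Rightarrow> real^'n \<Rightarrow> complex^'m" where
  "Ker \<Omega> s x = (1 / (norm x powr (s + 1))) *\<^sub>R \<Omega> x"

definition Kd :: "(real^'n \<Rightarrow> complex^'m) \<Rightarrow> real \<Rightarrow> real \<Rightarrow> real^'n \<Rightarrow> complex^'m" where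
  "Kd \<Omega> s \<delta> x = (1 / (max \<delta> (norm x) powr (s + 1))) *\<^sub>R \<Omega> x"

definition Tdelta :: "(real^'n \<Rightarrow> complex^'m) \<Rightarrow> real \<Rightarrow> (real^'n) measure \<Rightarrow> real
                        \<Rightarrow> (real^'n \<Rightarrow> complex) \<Rightarrow> real^'n \<Rightarrow> complex^'m" where
  "Tdelta \<Omega> s \<mu> \<delta> f x = integral\<^sup>L \<mu> (\<lambda>y. \<chi> i. f y * (Kd \<Omega> s \<delta> (x - y) $ i))"

definition nice :: "real \<Rightarrow> real \<Rightarrow> (real^'n) measure \<Rightarrow> bool" where
  "nice s \<Lambda> \<mu> \<longleftrightarrow> sets \<mu> = sets borel \<and>
     (\<forall>x r. r > 0 \<longrightarrow> emeasure \<mu> (ball x r) \<le> ennreal (\<Lambda> * r powr s))"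

definition good :: "(real^'n \<Rightarrow> complex^'m) \<Rightarrow> real \<Rightarrow> real \<Rightarrow> (real^'n) measure \<Rightarrow> bool" where
  "good \<Omega> s \<Lambda> \<mu> \<longleftrightarrow> nice s \<Lambda> \<mu> \<and>
     (\<forall>\<delta>>0. \<forall>f::real^'n \<Rightarrow> complex. f \<in> borel_measurable \<mu> \<longrightarrow>
        (\<integral>\<^sup>+ y. ennreal ((norm (f y))\<^sup>2) \<partial>\<mu>) < \<infinity> \<longrightarrow>
        (\<integral>\<^sup>+ x. ennreal ((norm (Tdelta \<Omega> s \<mu> \<delta> f x))\<^sup>2) \<partial>\<mu>)
          \<le> ennreal (\<Lambda>\<^sup>2) * (\<integral>\<^sup>+ y. ennreal ((norm (f y))\<^sup>2) \<partial>\<mu>))"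

definition eta_adm :: "(real^'n) measure \<Rightarrow> (real^'n) set \<Rightarrow> (real^'n \<Rightarrow> real) \<Rightarrow> bool" where
  "eta_adm \<mu> B' \<eta> \<longleftrightarrow> (\<exists>c r. r > 0 \<and> B' = ball c r) \<and> emeasure \<mu> B' > 0 \<and>
     (\<forall>z. 0 \<le> \<eta> z) \<and> (\<exists>L. L-lipschitz_on UNIV \<eta>) \<and>
     compact (closure {z. \<eta> z \<noteq> 0}) \<and> closure {z. \<eta> z \<noteq> 0} \<subseteq> B' \<and>
     integral\<^sup>L \<mu> \<eta> = 1"

definition phi_adm :: "(real^'n) measure \<Rightarrow> (real^'n) set \<Rightarrow> real^'n \<Rightarrow> (real^'n) set
                        \<Rightarrow> (real^'n \<Rightarrow> real) \<Rightarrow> bool" where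
  "phi_adm \<mu> B' x B \<phi> \<longleftrightarrow> (\<exists>c r. r > 0 \<and> B = ball c r \<and> (\<forall>y\<in>ball c (2 * r). \<phi> y = 1)) \<and>
     x \<in> B \<and> B' \<subseteq> B \<and> \<phi> \<in> borel_measurable borel \<and>
     compact (closure {y. \<phi> y \<noteq> 0}) \<and> (\<forall>y. 0 \<le> \<phi> y \<and> \<phi> y \<le> 1) \<and>
     integrable \<mu> (\<lambda>y. (\<phi> y)\<^sup>2)"

text \<open>\<integral> eta T_mu(phi) d mu = <T_mu phi, eta>_mu = lim_{delta \<rightarrow> 0} <T_{mu,delta} phi, eta>_mu.\<close>
definition TmuPair :: "(real^'n \<Rightarrow> complex^'m) \<Rightarrow> real \<Rightarrow> (real^'n) measure
                         \<Rightarrow> (real^'n \<Rightarrow> real) \<Rightarrow> (real^'n \<Rightarrow> real) \<Rightarrow> complex^'m" where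
  "TmuPair \<Omega> s \<mu> \<phi> \<eta> = Lim (at_right 0)
     (\<lambda>\<delta>. integral\<^sup>L \<mu> (\<lambda>z. \<eta> z *\<^sub>R Tdelta \<Omega> s \<mu> \<delta> (\<lambda>y. complex_of_real (\<phi> y)) z))"

definition Ttilde :: "(real^'n \<Rightarrow> complex^'m) \<Rightarrow> real \<Rightarrow> (real^'n) measure \<Rightarrow> (real^'n \<Rightarrow> real)
                        \<Rightarrow> real \<Rightarrow> (real^'n \<Rightarrow> real) \<Rightarrow> real^'n \<Rightarrow> complex^'m" where
  "Ttilde \<Omega> s \<mu> \<eta> \<delta> \<phi> x =
     Tdelta \<Omega> s \<mu> \<delta> (\<lambda>y. complex_of_real (\<phi> y)) x - TmuPair \<Omega> s \<mu> \<phi> \<eta>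
     + integral\<^sup>L \<mu> (\<lambda>y. (1 - \<phi> y) *\<^sub>R
          integral\<^sup>L \<mu> (\<lambda>z. \<eta> z *\<^sub>R (Kd \<Omega> s \<delta> (x - y) - Ker \<Omega> s (z - y))))"

end

theory Submission
  imports Defs
begin



lemma powr_mult_self: "0 < (x::real) \<Longrightarrow> x powr a * x = x powr (a + 1)"
  by (simp add: powr_add)

lemma powr_neg_diff:
  fixes a b p :: real
  assumes a: "0 < a" and ab: "a \<le> b" and p: "0 < p"
  shows "a powr (-p) - b powr (-p) \<le> p * a powr (-p-1) * (b - a)"
proof (cases "a = b")
  case False
  then have ab': "a < b" using ab by simp
  have der: "\<And>x. a \<le> x \<Longrightarrow> x \<le> b \<Longrightarrow> ((\<lambda>z. z powr (-p)) has_real_derivative (-p) * x powr (-p - 1)) (at x)"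
    using a by (intro has_real_derivative_powr) auto
  obtain z where z: "a < z" "z < b" "b powr (-p) - a powr (-p) = (b - a) * ((-p) * z powr (-p - 1))"
    using MVT2[OF ab' der] by blast
  have "z powr (-p-1) \<le> a powr (-p-1)" using z a p by (intro powr_mono2') auto
  then have "(b - a) * (p * z powr (-p-1)) \<le> (b - a) * (p * a powr (-p-1))"
    using ab p by (intro mult_left_mono) auto
  then show ?thesis using z(3) by (simp add: algebra_simps)
qed simp

lemma powr_neg_absdiff:
  fixes a b p :: real
  assumes a: "0 < a" and b: "0 < b" and p: "0 < p"
  shows "\<bar>a powr (-p) - b powr (-p)\<bar> \<le> p * min a b powr (-p-1) * \<bar>a - b\<bar>"
proof (cases "a \<le> b")
  case True
  have "b powr (-p) \<le> a powr (-p)" using a True p by (intro powr_mono2') auto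
  then show ?thesis using powr_neg_diff[OF a True p] True by (simp add: min_def)
next
  case False
  have "a powr (-p) \<le> b powr (-p)" using b False p by (intro powr_mono2') auto
  then show ?thesis using powr_neg_diff[OF b _ p, of a] False by (simp add: min_def)
qed

locale kern =
  fixes \<Omega> :: "real^'n \<Rightarrow> complex^'m" and s \<alpha> :: real
  assumes adm: "omega_adm \<alpha> \<Omega>" and s_pos: "0 < s" and a_pos: "0 < \<alpha>" and a_le: "\<alpha> \<le> 1"
begin

lemma Om_hom: "\<Omega> (c *\<^sub>R x) = c *\<^sub>R \<Omega> x"
  using adm unfolding omega_adm_def by blast
lemma Om_0[simp]: "\<Omega> 0 = 0"
  using Om_hom[of 0 0] by simp
lemma Om_odd: "\<Omega> (- x) = - \<Omega> x"
  using adm unfolding omega_adm_def by blast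
lemma Om_sph: "norm x = 1 \<Longrightarrow> norm (\<Omega> x) \<le> 1"
  using adm unfolding omega_adm_def by blast
lemma Om_sph_hold: "norm x = 1 \<Longrightarrow> norm y = 1 \<Longrightarrow> norm (\<Omega> x - \<Omega> y) \<le> norm (x - y) powr \<alpha>"
  using adm unfolding omega_adm_def by blast

lemma Om_polar: "\<Omega> u = norm u *\<^sub>R \<Omega> (sgn u)"
proof (cases "u = 0")
  case False
  have "u = norm u *\<^sub>R sgn u" by (simp add: sgn_div_norm False)
  then show ?thesis by (metis Om_hom)
qed simp

lemma Om_norm: "norm (\<Omega> u) \<le> norm u"
proof (cases "u = 0")
  case False
  have "norm (\<Omega> u) = norm u * norm (\<Omega> (sgn u))" by (subst Om_polar) simp
  also have "\<dots> \<le> norm u * 1" using Om_sph[of "sgn u"] False by (intro mult_left_mono) (auto simp: norm_sgn)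
  finally show ?thesis by simp
qed simp


lemma sgn_diff_le:
  fixes u v :: "real^'n"
  assumes u: "u \<noteq> 0" and v: "v \<noteq> 0" and le: "norm v \<le> norm u"
  shows "norm (sgn u - sgn v) \<le> 2 * norm (u - v) / norm u"
proof -
  have nu: "norm u > 0" using u by simp
  have nv: "norm v > 0" using v by simp
  have eq: "sgn u - sgn v = (1/norm u) *\<^sub>R (u - v) + ((norm v - norm u) / norm u) *\<^sub>R sgn v"
  proof -
    have c: "(norm v - norm u) / norm u * (1 / norm v) - 1 / norm u = - (1 / norm v)"
      using nu nv by (simp add: field_simps)
    have "((norm v - norm u) / norm u) *\<^sub>R sgn v - (1/norm u) *\<^sub>R v
        = ((norm v - norm u) / norm u * (1 / norm v) - 1 / norm u) *\<^sub>R v"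
      by (simp add: sgn_div_norm scaleR_diff_left divide_inverse)
    also have "\<dots> = - ((1 / norm v) *\<^sub>R v)" by (simp only: c scaleR_minus_left)
    finally have "((norm v - norm u) / norm u) *\<^sub>R sgn v - (1/norm u) *\<^sub>R v = - ((1 / norm v) *\<^sub>R v)" .
    then show ?thesis by (simp add: sgn_div_norm scaleR_diff_right divide_inverse algebra_simps)
  qed
  have "norm (sgn u - sgn v) \<le> norm ((1/norm u) *\<^sub>R (u - v)) + norm (((norm v - norm u) / norm u) *\<^sub>R sgn v)"
    unfolding eq by (rule norm_triangle_ineq)
  also have "norm ((1/norm u) *\<^sub>R (u - v)) = norm (u - v) / norm u" by simp
  also have "norm (((norm v - norm u) / norm u) *\<^sub>R sgn v) = \<bar>norm v - norm u\<bar> / norm u"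
    using nu v by (simp add: norm_sgn)
  finally have 1: "norm (sgn u - sgn v) \<le> norm (u - v) / norm u + \<bar>norm v - norm u\<bar> / norm u" .
  have 2: "\<bar>norm v - norm u\<bar> \<le> norm (u - v)"
    using norm_triangle_ineq3[of v u] by (simp add: norm_minus_commute)
  have 3: "\<bar>norm v - norm u\<bar> / norm u \<le> norm (u - v) / norm u"
    using 2 nu by (rule divide_right_mono[OF _ less_imp_le])
  from 1 3 show ?thesis by simp
qed

lemma pw_le: "0 \<le> a \<Longrightarrow> a \<le> M \<Longrightarrow> a \<le> a powr \<alpha> * M powr (1 - \<alpha>)"
proof (cases "a = 0")
  case False
  assume a: "0 \<le> a" "a \<le> M"
  then have "a = a powr \<alpha> * a powr (1 - \<alpha>)" using False by (simp add: powr_add[symmetric])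
  also have "\<dots> \<le> a powr \<alpha> * M powr (1 - \<alpha>)" using a a_le by (intro mult_left_mono powr_mono2) auto
  finally show ?thesis .
qed simp

lemma two_powr_le: "0 \<le> e \<Longrightarrow> e \<le> 1 \<Longrightarrow> (2::real) powr e \<le> 2"
  using powr_mono[of e 1 "2::real"] by simp

lemma Om_hold_aux:
  assumes le: "norm v \<le> norm u" and uM: "norm u \<le> M"
  shows "norm (\<Omega> u - \<Omega> v) \<le> 4 * norm (u - v) powr \<alpha> * M powr (1 - \<alpha>)"
proof -
  have M0: "0 \<le> M" using uM norm_ge_zero order_trans by blast
  show ?thesis
  proof (cases "v = 0")
    case True
    have "norm (\<Omega> u - \<Omega> v) \<le> norm u" using True Om_norm by simp
    also have "\<dots> \<le> norm u powr \<alpha> * M powr (1 - \<alpha>)" using pw_le[of "norm u" M] uM by simp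
    also have "\<dots> \<le> 4 * (norm u powr \<alpha> * M powr (1 - \<alpha>))" by simp
    finally show ?thesis using True by simp
  next
    case False
    then have u0: "u \<noteq> 0" using le by auto
    have nu: "norm u > 0" using u0 by simp
    have "\<Omega> u - \<Omega> v = norm u *\<^sub>R (\<Omega> (sgn u) - \<Omega> (sgn v)) + (norm u - norm v) *\<^sub>R \<Omega> (sgn v)"
      by (subst (1 2) Om_polar) (simp add: algebra_simps)
    then have "norm (\<Omega> u - \<Omega> v) \<le> norm (norm u *\<^sub>R (\<Omega> (sgn u) - \<Omega> (sgn v))) + norm ((norm u - norm v) *\<^sub>R \<Omega> (sgn v))"
      by (simp only: norm_triangle_ineq)
    then have A: "norm (\<Omega> u - \<Omega> v) \<le> norm u * norm (\<Omega> (sgn u) - \<Omega> (sgn v)) + \<bar>norm u - norm v\<bar> * norm (\<Omega> (sgn v))"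
      by simp
    have B1: "norm (\<Omega> (sgn u) - \<Omega> (sgn v)) \<le> norm (sgn u - sgn v) powr \<alpha>"
      using Om_sph_hold u0 False by (simp add: norm_sgn)
    have B2: "\<bar>norm u - norm v\<bar> \<le> norm (u - v)" by (rule norm_triangle_ineq3)
    have B3: "norm (\<Omega> (sgn v)) \<le> 1" using Om_sph False by (simp add: norm_sgn)
    have B4: "norm (sgn u - sgn v) powr \<alpha> \<le> (2 * norm (u - v) / norm u) powr \<alpha>"
      using sgn_diff_le[OF u0 False le] a_pos by (intro powr_mono2) auto
    have C1: "norm u * norm (\<Omega> (sgn u) - \<Omega> (sgn v)) \<le> norm u * (2 * norm (u - v) / norm u) powr \<alpha>"
      using B1 B4 by (intro mult_left_mono) auto
    have "norm u * (2 * norm (u - v) / norm u) powr \<alpha> = 2 powr \<alpha> * norm (u - v) powr \<alpha> * (norm u / norm u powr \<alpha>)"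
      using nu by (simp add: powr_divide powr_mult)
    also have "norm u / norm u powr \<alpha> = norm u powr (1 - \<alpha>)"
      using nu by (simp add: powr_diff)
    finally have C2: "norm u * (2 * norm (u - v) / norm u) powr \<alpha> = 2 powr \<alpha> * norm (u - v) powr \<alpha> * norm u powr (1 - \<alpha>)" .
    have C3: "2 powr \<alpha> * norm (u - v) powr \<alpha> * norm u powr (1 - \<alpha>) \<le> 2 * norm (u - v) powr \<alpha> * M powr (1 - \<alpha>)"
    proof (rule mult_mono)
      show "2 powr \<alpha> * norm (u - v) powr \<alpha> \<le> 2 * norm (u - v) powr \<alpha>"
        using two_powr_le[of \<alpha>] a_pos a_le by (intro mult_right_mono) auto
      show "norm u powr (1 - \<alpha>) \<le> M powr (1 - \<alpha>)" using uM a_le by (intro powr_mono2) auto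
    qed auto
    have D1: "\<bar>norm u - norm v\<bar> * norm (\<Omega> (sgn v)) \<le> norm (u - v)"
      using B2 B3 by (metis abs_ge_zero mult_mono mult.right_neutral norm_ge_zero)
    have D2: "norm (u - v) \<le> 2 * norm (u - v) powr \<alpha> * M powr (1 - \<alpha>)"
    proof -
      have "norm (u - v) \<le> 2 * M" using le uM norm_triangle_ineq4[of u v] by linarith
      then have "norm (u - v) \<le> norm (u - v) powr \<alpha> * (2 * M) powr (1 - \<alpha>)" by (intro pw_le) auto
      also have "(2 * M) powr (1 - \<alpha>) = 2 powr (1 - \<alpha>) * M powr (1 - \<alpha>)" using M0 by (simp add: powr_mult)
      finally have "norm (u - v) \<le> norm (u - v) powr \<alpha> * (2 powr (1 - \<alpha>) * M powr (1 - \<alpha>))" .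
      moreover have "2 powr (1 - \<alpha>) * M powr (1 - \<alpha>) \<le> 2 * M powr (1 - \<alpha>)"
        using two_powr_le[of "1 - \<alpha>"] a_pos a_le by (intro mult_right_mono) auto
      ultimately have "norm (u - v) \<le> norm (u - v) powr \<alpha> * (2 * M powr (1 - \<alpha>))"
        by (meson mult_left_mono order_trans powr_ge_zero)
      then show ?thesis by (simp add: mult_ac)
    qed
    show ?thesis using A C1 C2 C3 D1 D2 by linarith
  qed
qed

lemma Om_hold:
  assumes "norm u \<le> M" "norm v \<le> M"
  shows "norm (\<Omega> u - \<Omega> v) \<le> 4 * norm (u - v) powr \<alpha> * M powr (1 - \<alpha>)"
proof (cases "norm v \<le> norm u")
  case True then show ?thesis using Om_hold_aux assms by blast
next
  case False
  then have "norm (\<Omega> v - \<Omega> u) \<le> 4 * norm (v - u) powr \<alpha> * M powr (1 - \<alpha>)" using Om_hold_aux assms by simp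
  then show ?thesis by (simp add: norm_minus_commute)
qed

lemma Kd_alt: "Kd \<Omega> s \<delta> u = (max \<delta> (norm u) powr (-(s+1))) *\<^sub>R \<Omega> u"
  unfolding Kd_def by (simp only: powr_minus_divide)

lemma Ker_alt: "Ker \<Omega> s u = (norm u powr (-(s+1))) *\<^sub>R \<Omega> u"
  unfolding Ker_def by (simp only: powr_minus_divide)

lemma Kd_norm:
  assumes d: "0 < \<delta>"
  shows "norm (Kd \<Omega> s \<delta> u) \<le> max \<delta> (norm u) powr (-s)"
proof -
  let ?R = "max \<delta> (norm u)"
  have R: "0 < ?R" using d by simp
  have "norm (Kd \<Omega> s \<delta> u) = ?R powr (-(s+1)) * norm (\<Omega> u)" by (simp add: Kd_alt)
  also have "\<dots> \<le> ?R powr (-(s+1)) * ?R" using Om_norm[of u] by (intro mult_left_mono) auto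
  also have "\<dots> = ?R powr (-(s+1) + 1)" using R by (rule powr_mult_self)
  also have "\<dots> = ?R powr (-s)" by simp
  finally show ?thesis .
qed

lemma Ker_norm: "norm (Ker \<Omega> s u) \<le> norm u powr (-s)"
proof (cases "u = 0")
  case False
  have R: "0 < norm u" using False by simp
  have "norm (Ker \<Omega> s u) = norm u powr (-(s+1)) * norm (\<Omega> u)" by (simp add: Ker_alt)
  also have "\<dots> \<le> norm u powr (-(s+1)) * norm u" using Om_norm[of u] by (intro mult_left_mono) auto
  also have "\<dots> = norm u powr (-(s+1) + 1)" using R by (rule powr_mult_self)
  also have "\<dots> = norm u powr (-s)" by simp
  finally show ?thesis .
qed (simp add: Ker_def)

lemma Kd_eq_Ker: "\<delta> \<le> norm u \<Longrightarrow> Kd \<Omega> s \<delta> u = Ker \<Omega> s u"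
  unfolding Kd_def Ker_def by (simp add: max_def)

lemma Kd_odd: "Kd \<Omega> s \<delta> (- u) = - Kd \<Omega> s \<delta> u"
  unfolding Kd_def by (simp add: Om_odd)

lemma Ker_odd: "Ker \<Omega> s (- u) = - Ker \<Omega> s u"
  unfolding Ker_def by (simp add: Om_odd)

lemma Kd_zero[simp]: "Kd \<Omega> s \<delta> 0 = 0" unfolding Kd_def by simp
lemma Ker_zero[simp]: "Ker \<Omega> s 0 = 0" unfolding Ker_def by simp

definition CH where "CH = 8 + (s + 1) * 2 powr (s + 3)"

lemma CH_pos: "0 < CH" unfolding CH_def using s_pos by (simp add: add_pos_nonneg)

lemma Kd_hold:
  assumes d: "0 < \<delta>" and t: "norm (u - v) \<le> max \<delta> (norm u) / 2"
  shows "norm (Kd \<Omega> s \<delta> u - Kd \<Omega> s \<delta> v) \<le> CH * norm (u - v) powr \<alpha> * max \<delta> (norm u) powr (-s-\<alpha>)"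
proof -
  define R where "R = max \<delta> (norm u)"
  define R' where "R' = max \<delta> (norm v)"
  define t where "t = norm (u - v)"
  have R0: "0 < R" using d by (simp add: R_def)
  have t0: "0 \<le> t" by (simp add: t_def)
  have tR: "t \<le> R / 2" using t by (simp add: R_def t_def)
  have tri: "norm u - t \<le> norm v" "norm v \<le> norm u + t"
    using norm_triangle_ineq2[of u v] norm_triangle_ineq2[of v u] by (auto simp: t_def norm_minus_commute)
  have RR': "R / 2 \<le> R'" using tri tR d by (auto simp: R_def R'_def max_def)
  have R'0: "0 < R'" using d by (simp add: R'_def)
  have dR: "\<bar>R - R'\<bar> \<le> t" using tri by (auto simp: R_def R'_def max_def)
  have vR: "norm v \<le> 2 * R" using tri tR by (auto simp: R_def)
  have "norm u \<le> R" by (simp add: R_def)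
  then have uR: "norm u \<le> 2 * R" using R0 by linarith
  have eq: "Kd \<Omega> s \<delta> u - Kd \<Omega> s \<delta> v = (R powr (-(s+1))) *\<^sub>R (\<Omega> u - \<Omega> v) + (R powr (-(s+1)) - R' powr (-(s+1))) *\<^sub>R \<Omega> v"
    by (simp add: Kd_alt R_def R'_def algebra_simps)
  have "norm (Kd \<Omega> s \<delta> u - Kd \<Omega> s \<delta> v) \<le> norm ((R powr (-(s+1))) *\<^sub>R (\<Omega> u - \<Omega> v)) + norm ((R powr (-(s+1)) - R' powr (-(s+1))) *\<^sub>R \<Omega> v)"
    unfolding eq by (rule norm_triangle_ineq)
  then have A: "norm (Kd \<Omega> s \<delta> u - Kd \<Omega> s \<delta> v) \<le> R powr (-(s+1)) * norm (\<Omega> u - \<Omega> v) + \<bar>R powr (-(s+1)) - R' powr (-(s+1))\<bar> * norm (\<Omega> v)"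
    by simp
  have B: "norm (\<Omega> u - \<Omega> v) \<le> 8 * t powr \<alpha> * R powr (1 - \<alpha>)"
  proof -
    have "norm (\<Omega> u - \<Omega> v) \<le> 4 * t powr \<alpha> * (2 * R) powr (1 - \<alpha>)"
      using Om_hold[OF uR vR] by (simp add: t_def)
    also have "(2 * R) powr (1 - \<alpha>) = 2 powr (1 - \<alpha>) * R powr (1 - \<alpha>)" using R0 by (simp add: powr_mult)
    also have "4 * t powr \<alpha> * (2 powr (1 - \<alpha>) * R powr (1 - \<alpha>)) \<le> 4 * t powr \<alpha> * (2 * R powr (1 - \<alpha>))"
      using two_powr_le[of "1-\<alpha>"] a_pos a_le by (intro mult_left_mono mult_right_mono) auto
    finally show ?thesis by simp
  qed
  have B': "R powr (-(s+1)) * norm (\<Omega> u - \<Omega> v) \<le> 8 * t powr \<alpha> * R powr (-s-\<alpha>)"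
  proof -
    have "R powr (-(s+1)) * norm (\<Omega> u - \<Omega> v) \<le> R powr (-(s+1)) * (8 * t powr \<alpha> * R powr (1 - \<alpha>))"
      using B by (intro mult_left_mono) auto
    also have "\<dots> = 8 * t powr \<alpha> * (R powr (-(s+1)) * R powr (1 - \<alpha>))" by simp
    also have "R powr (-(s+1)) * R powr (1 - \<alpha>) = R powr (-s-\<alpha>)" by (simp add: powr_add[symmetric])
    finally show ?thesis .
  qed
  have C: "\<bar>R powr (-(s+1)) - R' powr (-(s+1))\<bar> \<le> (s+1) * (R/2) powr (-(s+1)-1) * t"
  proof -
    have "\<bar>R powr (-(s+1)) - R' powr (-(s+1))\<bar> \<le> (s+1) * min R R' powr (-(s+1)-1) * \<bar>R - R'\<bar>"
      using powr_neg_absdiff[OF R0 R'0, of "s+1"] s_pos by simp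
    also have "min R R' powr (-(s+1)-1) \<le> (R/2) powr (-(s+1)-1)"
      using RR' R0 s_pos by (intro powr_mono2') (auto simp: min_def)
    then have "(s+1) * min R R' powr (-(s+1)-1) * \<bar>R - R'\<bar> \<le> (s+1) * (R/2) powr (-(s+1)-1) * t"
      using dR s_pos by (intro mult_mono) auto
    finally show ?thesis .
  qed
  have C': "\<bar>R powr (-(s+1)) - R' powr (-(s+1))\<bar> * norm (\<Omega> v) \<le> (s+1) * 2 powr (s+3) * t powr \<alpha> * R powr (-s-\<alpha>)"
  proof -
    have two23: "2 * 2 powr (s+2) = (2::real) powr (s+3)" by (simp add: powr_add)
    have "\<bar>R powr (-(s+1)) - R' powr (-(s+1))\<bar> * norm (\<Omega> v) \<le> ((s+1) * (R/2) powr (-(s+1)-1) * t) * (2 * R)"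
      using C Om_norm[of v] vR by (intro mult_mono) auto
    also have "(R/2) powr (-(s+1)-1) = 2 powr (s+2) * R powr (-(s+1)-1)"
      using R0 by (simp add: powr_divide powr_minus_divide divide_simps) (simp add: powr_minus_divide[symmetric] powr_add[symmetric])
    also have "((s+1) * (2 powr (s+2) * R powr (-(s+1)-1)) * t) * (2 * R) = (s+1) * 2 powr (s+3) * t * (R powr (-(s+1)-1) * R)"
      using two23 by (simp add: mult_ac)
    also have "R powr (-(s+1)-1) * R = R powr (-(s+1)-1 + 1)" using R0 by (rule powr_mult_self)
    also have "-(s+1)-1 + 1 = -s-1" by simp
    also have "t \<le> t powr \<alpha> * R powr (1 - \<alpha>)" using tR R0 t0 by (intro pw_le) auto
    then have "(s+1) * 2 powr (s+3) * t * R powr (-s-1) \<le> (s+1) * 2 powr (s+3) * (t powr \<alpha> * R powr (1 - \<alpha>)) * R powr (-s-1)"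
      using s_pos by (intro mult_right_mono mult_left_mono) auto
    also have "(s+1) * 2 powr (s+3) * (t powr \<alpha> * R powr (1 - \<alpha>)) * R powr (-s-1) = (s+1) * 2 powr (s+3) * t powr \<alpha> * (R powr (1 - \<alpha>) * R powr (-s-1))"
      by (simp add: mult_ac)
    also have "R powr (1 - \<alpha>) * R powr (-s-1) = R powr ((1 - \<alpha>) + (-s-1))" by (simp only: powr_add)
    also have "(1 - \<alpha>) + (-s-1) = -s-\<alpha>" by simp
    finally show ?thesis by simp
  qed
  have "norm (Kd \<Omega> s \<delta> u - Kd \<Omega> s \<delta> v) \<le> 8 * t powr \<alpha> * R powr (-s-\<alpha>) + (s+1) * 2 powr (s+3) * t powr \<alpha> * R powr (-s-\<alpha>)"
    using A B' C' by linarith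
  also have "\<dots> = CH * t powr \<alpha> * R powr (-s-\<alpha>)" by (simp add: CH_def algebra_simps)
  finally show ?thesis by (simp add: R_def t_def)
qed

end


lemma ennreal_suminf_upper: "(f k :: ennreal) \<le> suminf f"
  using sum_le_suminf[OF summableI, of "{k}" f] by simp

lemma dyadic_index:
  fixes q :: real assumes "1 \<le> q"
  shows "\<exists>k::nat. 2^k \<le> q \<and> q < 2^(Suc k)"
proof -
  obtain n where "q < 2^n" using real_arch_pow[of 2 q] by auto
  then obtain m where m: "q < 2^m" "\<And>i. i < m \<Longrightarrow> \<not> q < 2^i"
    using exists_least_iff[of "\<lambda>n. q < (2::real)^n"] by blast
  have "m \<noteq> 0"
  proof
    assume "m = 0" with m(1) assms show False by simp
  qed
  then obtain k where "m = Suc k" by (cases m) auto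
  then show ?thesis using m(1) m(2)[of k] by (intro exI[of _ k]) auto
qed

lemma dyadic_index2:
  fixes q :: real assumes "1 < q"
  shows "\<exists>k::nat. 2^k < q \<and> q \<le> 2^(Suc k)"
proof -
  obtain n where "q < 2^n" using real_arch_pow[of 2 q] by auto
  then have "q \<le> 2^n" by simp
  then obtain m where m: "q \<le> 2^m" "\<And>i. i < m \<Longrightarrow> \<not> q \<le> 2^i"
    using exists_least_iff[of "\<lambda>n. q \<le> (2::real)^n"] by blast
  have "m \<noteq> 0"
  proof
    assume "m = 0" with m(1) assms show False by simp
  qed
  then obtain k where "m = Suc k" by (cases m) auto
  then show ?thesis using m(1) m(2)[of k] by (intro exI[of _ k]) auto
qed

locale nicem = kern \<Omega> s \<alpha> for \<Omega> :: "real^'n \<Rightarrow> complex^'m" and s \<alpha> :: real +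
  fixes \<mu> :: "(real^'n) measure" and \<Lambda> :: real
  assumes sets_mu: "sets \<mu> = sets borel"
    and ballb: "\<And>x r. 0 < r \<Longrightarrow> emeasure \<mu> (ball x r) \<le> ennreal (\<Lambda> * r powr s)"
    and Lpos: "0 < \<Lambda>"
begin

lemma ball_borel[measurable]: "ball x r \<in> sets borel" by (simp add: borel_open)

lemma sets_mu_cong[measurable_cong]: "sets \<mu> = sets borel" by (rule sets_mu)

lemma space_mu[simp]: "space \<mu> = UNIV"
  using sets_eq_imp_space_eq[OF sets_mu] by simp

lemma Om_cont: "continuous_on UNIV \<Omega>"
  unfolding continuous_on_def
proof (intro ballI)
  fix u :: "real^'n" assume "u \<in> UNIV"
  define M where "M = norm u + 1"
  have ev: "eventually (\<lambda>v. norm (\<Omega> v - \<Omega> u) \<le> 4 * norm (v - u) powr \<alpha> * M powr (1 - \<alpha>)) (at u)"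
    unfolding eventually_at
  proof (intro exI[of _ 1] conjI ballI impI)
    fix v assume "v \<in> UNIV" "v \<noteq> u \<and> dist v u < 1"
    then have "norm v \<le> M" using norm_triangle_ineq2[of v u] by (auto simp: M_def dist_norm)
    then show "norm (\<Omega> v - \<Omega> u) \<le> 4 * norm (v - u) powr \<alpha> * M powr (1 - \<alpha>)"
      using Om_hold[of v M u] by (simp add: M_def)
  qed simp
  have lim: "((\<lambda>v. 4 * norm (v - u) powr \<alpha> * M powr (1 - \<alpha>)) \<longlongrightarrow> 0) (at u)"
  proof -
    have "((\<lambda>v. norm (v - u)) \<longlongrightarrow> 0) (at u)"
      by (intro tendsto_eq_intros) auto
    then have "((\<lambda>v. norm (v - u) powr \<alpha>) \<longlongrightarrow> 0) (at u)"
      using a_pos by (intro tendsto_zero_powrI) auto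
    then show ?thesis using a_pos by (intro tendsto_eq_intros) auto
  qed
  have "((\<lambda>v. \<Omega> v - \<Omega> u) \<longlongrightarrow> 0) (at u)" by (rule Lim_null_comparison[OF ev lim])
  then show "(\<Omega> \<longlongrightarrow> \<Omega> u) (at u within UNIV)" by (simp add: LIM_zero_cancel)
qed

lemma Om_meas[measurable]: "\<Omega> \<in> borel_measurable borel"
  by (rule borel_measurable_continuous_onI[OF Om_cont])

lemma Kd_meas[measurable]: "Kd \<Omega> s \<delta> \<in> borel_measurable borel"
  unfolding Kd_def by measurable

lemma Ker_meas[measurable]: "Ker \<Omega> s \<in> borel_measurable borel"
  unfolding Ker_def by measurable

lemma ball_mu: "emeasure \<mu> (ball x r) < \<infinity>"
proof (cases "r > 0")
  case True then show ?thesis using ballb[OF True, of x] by (simp add: le_less_trans)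
qed (simp add: ball_eq_empty[THEN iffD2])

lemma bounded_fin: "bounded A \<Longrightarrow> A \<in> sets borel \<Longrightarrow> emeasure \<mu> A < \<infinity>"
proof -
  assume b: "bounded A" and A: "A \<in> sets borel"
  obtain r where "A \<subseteq> ball 0 r" using b bounded_subset_ballD by blast
  then have "emeasure \<mu> A \<le> emeasure \<mu> (ball 0 r)" using A by (intro emeasure_mono) (auto simp: sets_mu)
  then show ?thesis using ball_mu le_less_trans by blast
qed

lemma sigma_fin: "sigma_finite_measure \<mu>"
proof
  show "\<exists>A. countable A \<and> A \<subseteq> sets \<mu> \<and> \<Union> A = space \<mu> \<and> (\<forall>a\<in>A. emeasure \<mu> a \<noteq> \<infinity>)"
  proof (intro exI[of _ "range (\<lambda>n::nat. ball (0::real^'n) (real n))"] conjI)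
    show "\<Union> (range (\<lambda>n::nat. ball (0::real^'n) (real n))) = space \<mu>"
    proof -
      have "x \<in> (\<Union>n. ball 0 (real n))" for x :: "real^'n"
      proof -
        obtain n :: nat where "norm x < n" using reals_Archimedean2 by blast
        then show ?thesis by auto
      qed
      then show ?thesis by auto
    qed
  qed (use ball_mu in \<open>auto simp: sets_mu less_top\<close>)
qed

sublocale sf: sigma_finite_measure \<mu> by (rule sigma_fin)
sublocale pf: pair_sigma_finite \<mu> \<mu> ..

lemma dyadic_sum:
  fixes c r :: "nat \<Rightarrow> real" and f :: "real^'n \<Rightarrow> ennreal"
  assumes f: "\<And>y. f y \<le> (\<Sum>k. ennreal (c k) * indicator (ball x (r k)) y)"
    and c: "\<And>k. 0 \<le> c k" and r: "\<And>k. 0 < r k"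
  shows "(\<integral>\<^sup>+y. f y \<partial>\<mu>) \<le> (\<Sum>k. ennreal (c k * (\<Lambda> * r k powr s)))"
proof -
  have "(\<integral>\<^sup>+y. f y \<partial>\<mu>) \<le> (\<integral>\<^sup>+y. (\<Sum>k. ennreal (c k) * indicator (ball x (r k)) y) \<partial>\<mu>)"
    using f by (intro nn_integral_mono) auto
  also have "\<dots> = (\<Sum>k. \<integral>\<^sup>+y. ennreal (c k) * indicator (ball x (r k)) y \<partial>\<mu>)"
    by (intro nn_integral_suminf) (simp add: sets_mu)
  also have "\<dots> = (\<Sum>k. ennreal (c k) * emeasure \<mu> (ball x (r k)))"
    by (intro suminf_cong nn_integral_cmult_indicator) (simp add: sets_mu)
  also have "\<dots> \<le> (\<Sum>k. ennreal (c k * (\<Lambda> * r k powr s)))"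
  proof (intro suminf_le summableI)
    fix k
    have "ennreal (c k) * emeasure \<mu> (ball x (r k)) \<le> ennreal (c k) * ennreal (\<Lambda> * r k powr s)"
      using ballb[OF r] by (intro mult_left_mono) auto
    then show "ennreal (c k) * emeasure \<mu> (ball x (r k)) \<le> ennreal (c k * (\<Lambda> * r k powr s))"
      using c Lpos ennreal_mult[of "c k" "\<Lambda> * r k powr s"] by simp
  qed
  finally show ?thesis .
qed

definition Ctail :: "real \<Rightarrow> real" where "Ctail p = \<Lambda> * 2 powr s / (1 - 2 powr (s - p))"
definition Cinner :: "real \<Rightarrow> real" where "Cinner p = \<Lambda> * 2 powr p / (1 - 2 powr (p - s))"

lemma two_powr_lt1: "e < 0 \<Longrightarrow> (2::real) powr e < 1"
  using powr_less_mono[of e 0 "2::real"] by simp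

lemma Ctail_pos: "s < p \<Longrightarrow> 0 < Ctail p"
  unfolding Ctail_def using Lpos two_powr_lt1[of "s - p"] by (intro divide_pos_pos mult_pos_pos) auto

lemma Cinner_pos: "p < s \<Longrightarrow> 0 < Cinner p"
  unfolding Cinner_def using Lpos two_powr_lt1[of "p - s"] by (intro divide_pos_pos mult_pos_pos) auto

lemma tail:
  assumes rho: "0 < \<rho>" and p: "s < p"
  shows "(\<integral>\<^sup>+y. ennreal (indicator (- ball x \<rho>) y * dist x y powr (-p)) \<partial>\<mu>) \<le> ennreal (Ctail p * \<rho> powr (s - p))"
proof -
  define c where "c k = (\<rho> * 2^k) powr (-p)" for k :: nat
  define r where "r k = \<rho> * 2^(Suc k)" for k :: nat
  have "(\<integral>\<^sup>+y. ennreal (indicator (- ball x \<rho>) y * dist x y powr (-p)) \<partial>\<mu>) \<le> (\<Sum>k. ennreal (c k * (\<Lambda> * r k powr s)))"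
  proof (rule dyadic_sum)
    fix y
    show "ennreal (indicator (- ball x \<rho>) y * dist x y powr (-p)) \<le> (\<Sum>k. ennreal (c k) * indicator (ball x (r k)) y)"
    proof (cases "\<rho> \<le> dist x y")
      case True
      then have "1 \<le> dist x y / \<rho>" using rho by simp
      then obtain k where k: "2^k \<le> dist x y / \<rho>" "dist x y / \<rho> < 2^(Suc k)" using dyadic_index by blast
      have k1: "\<rho> * 2^k \<le> dist x y" using k(1) rho by (simp add: field_simps)
      have k2: "dist x y < r k" using k(2) rho by (simp add: field_simps r_def)
      have "dist x y powr (-p) \<le> c k" unfolding c_def using k1 rho p s_pos by (intro powr_mono2') auto
      then have "ennreal (indicator (- ball x \<rho>) y * dist x y powr (-p)) \<le> ennreal (c k) * indicator (ball x (r k)) y"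
        using True k2 by (auto simp: indicator_def intro: ennreal_leI)
      also have "\<dots> \<le> (\<Sum>k. ennreal (c k) * indicator (ball x (r k)) y)"
        by (rule ennreal_suminf_upper)
      finally show ?thesis .
    qed (auto simp: indicator_def)
  qed (auto simp: c_def r_def rho)
  also have "(\<Sum>k. ennreal (c k * (\<Lambda> * r k powr s))) = (\<Sum>k. ennreal ((\<Lambda> * 2 powr s * \<rho> powr (s - p)) * (2 powr (s - p))^k))"
  proof (intro suminf_cong arg_cong[where f=ennreal])
    fix k :: nat
    have e1: "((2::real)^k) powr a = (2 powr a)^k" for a
      by (simp add: powr_realpow[symmetric] powr_powr powr_power mult.commute)
    have "c k * (\<Lambda> * r k powr s) = \<Lambda> * 2 powr s * (\<rho> powr (-p) * \<rho> powr s) * ((2 powr (-p))^k * (2 powr s)^k)"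
      using rho by (simp add: c_def r_def powr_mult e1 mult_ac)
    also have "(2 powr (-p))^k * (2 powr s)^k = (2 powr (s - p))^k"
      by (simp add: power_mult_distrib[symmetric] powr_add[symmetric])
    also have "\<rho> powr (-p) * \<rho> powr s = \<rho> powr (s - p)" by (simp add: powr_add[symmetric])
    finally show "c k * (\<Lambda> * r k powr s) = (\<Lambda> * 2 powr s * \<rho> powr (s - p)) * (2 powr (s - p))^k"
      by (simp add: mult_ac)
  qed
  also have "\<dots> = ennreal (Ctail p * \<rho> powr (s - p))"
  proof -
    have q: "norm ((2::real) powr (s - p)) < 1" using p two_powr_lt1[of "s - p"] by simp
    have "(\<lambda>k. (\<Lambda> * 2 powr s * \<rho> powr (s - p)) * (2 powr (s - p))^k) sums ((\<Lambda> * 2 powr s * \<rho> powr (s - p)) * (1 / (1 - 2 powr (s - p))))"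
      by (intro sums_mult geometric_sums q)
    moreover have "(\<Lambda> * 2 powr s * \<rho> powr (s - p)) * (1 / (1 - 2 powr (s - p))) = Ctail p * \<rho> powr (s - p)"
      by (simp add: Ctail_def)
    ultimately show ?thesis using Lpos
      by (subst suminf_ennreal2) (auto simp: sums_iff)
  qed
  finally show ?thesis .
qed

lemma inner:
  assumes rho: "0 < \<rho>" and p: "0 < p" "p < s"
  shows "(\<integral>\<^sup>+y. ennreal (indicator (ball x \<rho>) y * dist x y powr (-p)) \<partial>\<mu>) \<le> ennreal (Cinner p * \<rho> powr (s - p))"
proof -
  define c where "c k = (\<rho> / 2^(Suc k)) powr (-p)" for k :: nat
  define r where "r k = \<rho> / 2^k" for k :: nat
  have "(\<integral>\<^sup>+y. ennreal (indicator (ball x \<rho>) y * dist x y powr (-p)) \<partial>\<mu>) \<le> (\<Sum>k. ennreal (c k * (\<Lambda> * r k powr s)))"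
  proof (rule dyadic_sum)
    fix y
    show "ennreal (indicator (ball x \<rho>) y * dist x y powr (-p)) \<le> (\<Sum>k. ennreal (c k) * indicator (ball x (r k)) y)"
    proof (cases "0 < dist x y \<and> dist x y < \<rho>")
      case True
      then have "1 < \<rho> / dist x y" using rho by simp
      then obtain k where k: "2^k < \<rho> / dist x y" "\<rho> / dist x y \<le> 2^(Suc k)" using dyadic_index2 by blast
      have k1: "\<rho> / 2^(Suc k) \<le> dist x y" using k(2) True by (simp add: field_simps)
      have k2: "dist x y < r k" using k(1) True by (simp add: field_simps r_def)
      have "dist x y powr (-p) \<le> c k" unfolding c_def using k1 rho p by (intro powr_mono2') auto
      then have "ennreal (indicator (ball x \<rho>) y * dist x y powr (-p)) \<le> ennreal (c k) * indicator (ball x (r k)) y"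
        using True k2 by (auto simp: indicator_def intro: ennreal_leI)
      also have "\<dots> \<le> (\<Sum>k. ennreal (c k) * indicator (ball x (r k)) y)"
        by (rule ennreal_suminf_upper)
      finally show ?thesis .
    qed (auto simp: indicator_def)
  qed (auto simp: c_def r_def rho)
  also have "(\<Sum>k. ennreal (c k * (\<Lambda> * r k powr s))) = (\<Sum>k. ennreal ((\<Lambda> * 2 powr p * \<rho> powr (s - p)) * (2 powr (p - s))^k))"
  proof (intro suminf_cong arg_cong[where f=ennreal])
    fix k :: nat
    have e1: "((2::real)^k) powr a = (2 powr a)^k" for a
      by (simp add: powr_realpow[symmetric] powr_powr powr_power mult.commute)
    have "c k * (\<Lambda> * r k powr s) = \<Lambda> * 2 powr p * (\<rho> powr (-p) * \<rho> powr s) * ((2 powr p)^k * (2 powr (-s))^k)"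
      using rho by (simp add: c_def r_def powr_divide powr_mult e1 powr_minus_divide divide_simps mult_ac)
    also have "(2 powr p)^k * (2 powr (-s))^k = (2 powr (p - s))^k"
      by (simp add: power_mult_distrib[symmetric] powr_add[symmetric])
    also have "\<rho> powr (-p) * \<rho> powr s = \<rho> powr (s - p)" by (simp add: powr_add[symmetric])
    finally show "c k * (\<Lambda> * r k powr s) = (\<Lambda> * 2 powr p * \<rho> powr (s - p)) * (2 powr (p - s))^k"
      by (simp add: mult_ac)
  qed
  also have "\<dots> = ennreal (Cinner p * \<rho> powr (s - p))"
  proof -
    have q: "norm ((2::real) powr (p - s)) < 1" using p two_powr_lt1[of "p - s"] by simp
    have "(\<lambda>k. (\<Lambda> * 2 powr p * \<rho> powr (s - p)) * (2 powr (p - s))^k) sums ((\<Lambda> * 2 powr p * \<rho> powr (s - p)) * (1 / (1 - 2 powr (p - s))))"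
      by (intro sums_mult geometric_sums q)
    moreover have "(\<Lambda> * 2 powr p * \<rho> powr (s - p)) * (1 / (1 - 2 powr (p - s))) = Cinner p * \<rho> powr (s - p)"
      by (simp add: Cinner_def)
    ultimately show ?thesis using Lpos
      by (subst suminf_ennreal2) (auto simp: sums_iff)
  qed
  finally show ?thesis .
qed

lemma nn3:
  fixes f ga gb gc :: "real^'n \<Rightarrow> real"
  assumes [measurable]: "ga \<in> borel_measurable borel" "gb \<in> borel_measurable borel" "gc \<in> borel_measurable borel"
    and g: "\<And>y. 0 \<le> ga y" "\<And>y. 0 \<le> gb y" "\<And>y. 0 \<le> gc y"
    and abc: "0 \<le> a" "0 \<le> b" "0 \<le> c"
    and f: "\<And>y. f y \<le> a * ga y + b * gb y + c * gc y"
    and I1: "(\<integral>\<^sup>+y. ennreal (ga y) \<partial>\<mu>) \<le> ennreal A1"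
    and I2: "(\<integral>\<^sup>+y. ennreal (gb y) \<partial>\<mu>) \<le> ennreal A2"
    and I3: "(\<integral>\<^sup>+y. ennreal (gc y) \<partial>\<mu>) \<le> ennreal A3"
    and A: "0 \<le> A1" "0 \<le> A2" "0 \<le> A3"
  shows "(\<integral>\<^sup>+y. ennreal (f y) \<partial>\<mu>) \<le> ennreal (a * A1 + b * A2 + c * A3)"
proof -
  have "(\<integral>\<^sup>+y. ennreal (f y) \<partial>\<mu>) \<le> (\<integral>\<^sup>+y. ennreal a * ennreal (ga y) + ennreal b * ennreal (gb y) + ennreal c * ennreal (gc y) \<partial>\<mu>)"
  proof (intro nn_integral_mono)
    fix y
    have "ennreal (f y) \<le> ennreal (a * ga y + b * gb y + c * gc y)" using f by (intro ennreal_leI)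
    also have "\<dots> = ennreal a * ennreal (ga y) + ennreal b * ennreal (gb y) + ennreal c * ennreal (gc y)"
      using g abc by (simp add: ennreal_plus[symmetric] ennreal_mult[symmetric] del: ennreal_plus)
    finally show "ennreal (f y) \<le> ennreal a * ennreal (ga y) + ennreal b * ennreal (gb y) + ennreal c * ennreal (gc y)" .
  qed
  also have "\<dots> = ennreal a * (\<integral>\<^sup>+y. ennreal (ga y) \<partial>\<mu>) + ennreal b * (\<integral>\<^sup>+y. ennreal (gb y) \<partial>\<mu>) + ennreal c * (\<integral>\<^sup>+y. ennreal (gc y) \<partial>\<mu>)"
    by (simp add: nn_integral_add nn_integral_cmult)
  also have "\<dots> \<le> ennreal a * ennreal A1 + ennreal b * ennreal A2 + ennreal c * ennreal A3"
    using I1 I2 I3 by (intro add_mono mult_left_mono) auto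
  also have "\<dots> = ennreal (a * A1 + b * A2 + c * A3)"
    using A abc by (simp add: ennreal_plus[symmetric] ennreal_mult[symmetric] del: ennreal_plus)
  finally show ?thesis .
qed

lemma ind_ball_int: "0 < r \<Longrightarrow> (\<integral>\<^sup>+y. ennreal (indicator (ball x r) y) \<partial>\<mu>) \<le> ennreal (\<Lambda> * r powr s)"
  using ballb[of r x] by (simp add: sets_mu ennreal_indicator nn_integral_indicator)

definition pn where "pn = max (s - 1) (s / 2)"

lemma pn: "0 < pn" "pn < s" "s - pn \<le> 1"
  unfolding pn_def using s_pos by auto

lemma powr_le_1plus: "0 \<le> q \<Longrightarrow> 0 \<le> e \<Longrightarrow> e \<le> 1 \<Longrightarrow> (q::real) powr e \<le> 1 + q"
proof (cases "q \<le> 1")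
  case True
  assume "0 \<le> q" "0 \<le> e" "e \<le> 1"
  then have "q powr e \<le> 1" using True by (cases "q = 0") (auto intro: powr_le1)
  then show ?thesis using \<open>0 \<le> q\<close> by simp
next
  case False
  assume "0 \<le> q" "0 \<le> e" "e \<le> 1"
  then have "q powr e \<le> q powr 1" using False by (intro powr_mono) auto
  then show ?thesis using False by simp
qed

lemma near:
  assumes d: "0 < \<delta>" and rho: "0 < \<rho>"
  shows "(\<integral>\<^sup>+y. ennreal (indicator (ball z \<rho>) y * max \<delta> (dist z y) powr (-s)) \<partial>\<mu>) \<le> ennreal (\<Lambda> + Cinner pn * (1 + \<rho> / \<delta>))"
proof -
  have "(\<integral>\<^sup>+y. ennreal (indicator (ball z \<rho>) y * max \<delta> (dist z y) powr (-s)) \<partial>\<mu>)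
      \<le> ennreal (\<delta> powr (-s) * (\<Lambda> * \<delta> powr s) + \<delta> powr (pn - s) * (Cinner pn * \<rho> powr (s - pn)) + 0 * 0)"
  proof (rule nn3[where gc="\<lambda>_. 0"])
    fix y
    show "indicator (ball z \<rho>) y * max \<delta> (dist z y) powr (-s) \<le> \<delta> powr (-s) * indicator (ball z \<delta>) y
      + \<delta> powr (pn - s) * (indicator (ball z \<rho>) y * dist z y powr (-pn)) + 0 * 0"
    proof (cases "dist z y < \<delta>")
      case True
      then show ?thesis using d by (auto simp: indicator_def max_def)
    next
      case False
      then have dd: "\<delta> \<le> dist z y" "0 < dist z y" using d by auto
      have "dist z y powr (-s) = dist z y powr (-pn) * dist z y powr (pn - s)" by (simp add: powr_add[symmetric])
      also have "\<dots> \<le> dist z y powr (-pn) * \<delta> powr (pn - s)"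
        using dd d pn by (intro mult_left_mono powr_mono2') auto
      finally have "dist z y powr (-s) \<le> \<delta> powr (pn - s) * dist z y powr (-pn)" by (simp add: mult_ac)
      then show ?thesis using False dd by (auto simp: indicator_def max_def)
    qed
  qed (use d rho pn Lpos Cinner_pos[OF pn(2)] in \<open>auto intro: ind_ball_int inner\<close>)
  also have "\<delta> powr (-s) * (\<Lambda> * \<delta> powr s) = \<Lambda>" using d by (simp add: powr_minus_divide)
  also have "\<delta> powr (pn - s) * (Cinner pn * \<rho> powr (s - pn)) = Cinner pn * (\<rho> / \<delta>) powr (s - pn)"
    using d rho by (simp add: powr_divide powr_minus_divide[symmetric] powr_diff)
  also have "Cinner pn * (\<rho> / \<delta>) powr (s - pn) \<le> Cinner pn * (1 + \<rho> / \<delta>)"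
    using Cinner_pos[OF pn(2)] pn d rho by (intro mult_left_mono powr_le_1plus) auto
  then have "ennreal (\<Lambda> + Cinner pn * (\<rho> / \<delta>) powr (s - pn) + 0 * 0) \<le> ennreal (\<Lambda> + Cinner pn * (1 + \<rho> / \<delta>))"
    by (intro ennreal_leI) auto
  finally show ?thesis .
qed

lemma cball_compl_borel[measurable]: "- ball x r \<in> sets borel"
  by (intro borel_comp ball_borel)

definition Ef :: "real \<Rightarrow> real \<Rightarrow> real" where
  "Ef \<delta> t = t powr \<alpha> / \<delta> powr \<alpha> * max 1 (t / \<delta>) powr (1 - \<alpha>)"

lemma Ef_ge1:
  assumes d: "0 < \<delta>" and t: "0 \<le> t"
  shows "(t / \<delta>) powr \<alpha> \<le> Ef \<delta> t"
proof -
  have "1 \<le> max 1 (t / \<delta>) powr (1 - \<alpha>)"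
  proof (cases "\<alpha> = 1")
    case True then show ?thesis by simp
  next
    case False then show ?thesis using a_le by (intro ge_one_powr_ge_zero) auto
  qed
  moreover have "t powr \<alpha> / \<delta> powr \<alpha> = (t / \<delta>) powr \<alpha>" using d t by (simp add: powr_divide)
  ultimately show ?thesis unfolding Ef_def
    by (metis mult_left_mono mult.right_neutral powr_ge_zero)
qed

lemma Ef_ge2:
  assumes d: "0 < \<delta>" and t: "\<delta> < 2 * t"
  shows "1 + t / \<delta> \<le> 4 * Ef \<delta> t"
proof -
  define q where "q = t / \<delta>"
  have q: "1/2 < q" using d t by (simp add: q_def field_simps)
  have E: "Ef \<delta> t = q powr \<alpha> * max 1 q powr (1 - \<alpha>)"
    using d t unfolding Ef_def q_def by (simp add: powr_divide)
  show ?thesis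
  proof (cases "1 \<le> q")
    case True
    then have "Ef \<delta> t = q" unfolding E using True by (simp add: max_def powr_add[symmetric])
    then show ?thesis using True by (simp add: q_def)
  next
    case False
    then have "Ef \<delta> t = q powr \<alpha>" unfolding E by (simp add: max_def)
    also have "q powr 1 \<le> q powr \<alpha>" using q False a_le by (intro powr_mono') auto
    finally have "q \<le> Ef \<delta> t" using q by simp
    then show ?thesis using q False by (simp add: q_def)
  qed
qed

definition Cmain where
  "Cmain = CH * (\<Lambda> + Ctail (s + \<alpha>)) + 4 * (CH * Ctail (s + \<alpha>) + 2 * \<Lambda> + 6 * Cinner pn)"

lemma Cmain_pos: "0 < Cmain"
  unfolding Cmain_def using CH_pos Lpos Ctail_pos[of "s + \<alpha>"] Cinner_pos[OF pn(2)] a_pos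
  by (intro add_pos_pos mult_pos_pos) auto

lemma main_est:
  assumes d: "0 < \<delta>"
  shows "(\<integral>\<^sup>+y. ennreal (norm (Kd \<Omega> s \<delta> (x - y) - Kd \<Omega> s \<delta> (x' - y))) \<partial>\<mu>) \<le> ennreal (Cmain * Ef \<delta> (norm (x - x')))"
proof -
  define t where "t = norm (x - x')"
  define T where "T = Ctail (s + \<alpha>)"
  have T: "0 < T" unfolding T_def using Ctail_pos[of "s+\<alpha>"] a_pos by simp
  have t0: "0 \<le> t" by (simp add: t_def)
  have uv: "(x - y) - (x' - y) = x - x'" for y by simp
  have ndist: "norm (z - y) = dist z y" for z y :: "real^'n" by (simp add: dist_norm)
  have Rmax: "max \<delta> (norm (x - y)) = max \<delta> (dist x y)" for y by (simp add: dist_norm)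
  show ?thesis
  proof (cases "2 * t \<le> \<delta>")
    case True
    have "(\<integral>\<^sup>+y. ennreal (norm (Kd \<Omega> s \<delta> (x - y) - Kd \<Omega> s \<delta> (x' - y))) \<partial>\<mu>)
        \<le> ennreal ((CH * t powr \<alpha> * \<delta> powr (-(s+\<alpha>))) * (\<Lambda> * \<delta> powr s) + (CH * t powr \<alpha>) * (T * \<delta> powr (s - (s+\<alpha>))) + 0 * 0)"
    proof (rule nn3[where gc="\<lambda>_. 0"])
      fix y
      have h: "norm (Kd \<Omega> s \<delta> (x - y) - Kd \<Omega> s \<delta> (x' - y)) \<le> CH * t powr \<alpha> * max \<delta> (dist x y) powr (-(s+\<alpha>))"
      proof -
        have "norm ((x - y) - (x' - y)) \<le> max \<delta> (norm (x - y)) / 2" using True by (simp add: t_def max_def)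
        from Kd_hold[OF d this] show ?thesis by (simp add: t_def Rmax)
      qed
      show "norm (Kd \<Omega> s \<delta> (x - y) - Kd \<Omega> s \<delta> (x' - y)) \<le> (CH * t powr \<alpha> * \<delta> powr (-(s+\<alpha>))) * indicator (ball x \<delta>) y
          + (CH * t powr \<alpha>) * (indicator (- ball x \<delta>) y * dist x y powr (-(s+\<alpha>))) + 0 * 0"
      proof (cases "dist x y < \<delta>")
        case True then show ?thesis using h by (simp add: indicator_def max_def)
      next
        case False then show ?thesis using h by (simp add: indicator_def max_def)
      qed
    qed (use d T CH_pos Lpos a_pos tail[of \<delta> "s+\<alpha>" x] in \<open>auto intro: ind_ball_int simp: T_def\<close>)
    also have "(CH * t powr \<alpha> * \<delta> powr (-(s+\<alpha>))) * (\<Lambda> * \<delta> powr s) + (CH * t powr \<alpha>) * (T * \<delta> powr (s - (s+\<alpha>))) + 0 * 0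
        = CH * (\<Lambda> + T) * (t powr \<alpha> * \<delta> powr (-\<alpha>))"
    proof -
      have "\<delta> powr (-(s+\<alpha>)) * \<delta> powr s = \<delta> powr (-\<alpha>)" by (simp add: powr_add[symmetric])
      then show ?thesis by (simp add: algebra_simps)
    qed
    also have "t powr \<alpha> * \<delta> powr (-\<alpha>) = (t / \<delta>) powr \<alpha>" using d t0 by (simp add: powr_divide powr_minus_divide)
    also have "CH * (\<Lambda> + T) * (t / \<delta>) powr \<alpha> \<le> Cmain * Ef \<delta> t"
    proof -
      have "CH * (\<Lambda> + T) * (t / \<delta>) powr \<alpha> \<le> CH * (\<Lambda> + T) * Ef \<delta> t"
        using Ef_ge1[OF d t0] CH_pos Lpos T by (intro mult_left_mono) auto
      also have "CH * (\<Lambda> + T) \<le> Cmain"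
        unfolding Cmain_def T_def using CH_pos Lpos Ctail_pos[of "s + \<alpha>"] Cinner_pos[OF pn(2)] a_pos by simp
      then have "CH * (\<Lambda> + T) * Ef \<delta> t \<le> Cmain * Ef \<delta> t"
        using Ef_ge1[OF d t0] by (intro mult_right_mono) (auto intro: order_trans[OF powr_ge_zero])
      finally show ?thesis .
    qed
    then have "ennreal (CH * (\<Lambda> + T) * (t / \<delta>) powr \<alpha>) \<le> ennreal (Cmain * Ef \<delta> t)" by (rule ennreal_leI)
    finally show ?thesis by (simp add: t_def)
  next
    case False
    then have t2: "\<delta> < 2 * t" by simp
    then have tp: "0 < t" using d by simp
    define N where "N = \<Lambda> + Cinner pn * (1 + 3 * t / \<delta>)"
    have "(\<integral>\<^sup>+y. ennreal (norm (Kd \<Omega> s \<delta> (x - y) - Kd \<Omega> s \<delta> (x' - y))) \<partial>\<mu>)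
        \<le> ennreal ((CH * t powr \<alpha>) * (T * (2 * t) powr (s - (s+\<alpha>))) + 1 * N + 1 * N)"
    proof (rule nn3)
      fix y
      show "norm (Kd \<Omega> s \<delta> (x - y) - Kd \<Omega> s \<delta> (x' - y)) \<le> (CH * t powr \<alpha>) * (indicator (- ball x (2 * t)) y * dist x y powr (-(s+\<alpha>)))
          + 1 * (indicator (ball x (3 * t)) y * max \<delta> (dist x y) powr (-s))
          + 1 * (indicator (ball x' (3 * t)) y * max \<delta> (dist x' y) powr (-s))"
      proof (cases "2 * t \<le> dist x y")
        case True
        have "norm ((x - y) - (x' - y)) \<le> max \<delta> (norm (x - y)) / 2" using True by (simp add: t_def dist_norm max_def)
        from Kd_hold[OF d this] have "norm (Kd \<Omega> s \<delta> (x - y) - Kd \<Omega> s \<delta> (x' - y)) \<le> CH * t powr \<alpha> * dist x y powr (-(s+\<alpha>))"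
          using True t2 by (simp add: t_def dist_norm max_def)
        then show ?thesis using True by (auto simp: indicator_def intro!: add_increasing2)
      next
        case False
        have "norm (Kd \<Omega> s \<delta> (x - y) - Kd \<Omega> s \<delta> (x' - y)) \<le> norm (Kd \<Omega> s \<delta> (x - y)) + norm (Kd \<Omega> s \<delta> (x' - y))"
          by (rule norm_triangle_ineq4)
        also have "\<dots> \<le> max \<delta> (dist x y) powr (-s) + max \<delta> (dist x' y) powr (-s)"
          using Kd_norm[OF d, of "x - y"] Kd_norm[OF d, of "x' - y"] by (simp add: dist_norm)
        finally have h: "norm (Kd \<Omega> s \<delta> (x - y) - Kd \<Omega> s \<delta> (x' - y)) \<le> max \<delta> (dist x y) powr (-s) + max \<delta> (dist x' y) powr (-s)" .
        have "dist x' y \<le> dist x' x + dist x y" by (rule dist_triangle)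
        then have "dist x' y < 3 * t" using False by (simp add: t_def dist_norm norm_minus_commute)
        moreover have "dist x y < 3 * t" using False tp by simp
        ultimately show ?thesis using h False
          by (simp add: indicator_def mult_nonneg_nonneg)
      qed
    qed (use d tp T CH_pos Lpos a_pos Cinner_pos[OF pn(2)] tail[of "2*t" "s+\<alpha>" x] near[OF d, of "3*t" x] near[OF d, of "3*t" x'] in \<open>auto simp: T_def N_def\<close>)
    also have "(CH * t powr \<alpha>) * (T * (2 * t) powr (s - (s+\<alpha>))) + 1 * N + 1 * N \<le> Cmain * Ef \<delta> t"
    proof -
      have "t powr \<alpha> * (2 * t) powr (s - (s+\<alpha>)) = 2 powr (-\<alpha>)"
        using tp by (simp add: powr_mult powr_minus_divide)
      also have "\<dots> \<le> 1" using a_pos two_powr_lt1[of "-\<alpha>"] by simp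
      finally have "(CH * t powr \<alpha>) * (T * (2 * t) powr (s - (s+\<alpha>))) \<le> CH * T"
        using CH_pos T by (simp add: mult_ac mult_left_le)
      then have X: "(CH * t powr \<alpha>) * (T * (2 * t) powr (s - (s+\<alpha>))) \<le> CH * T" .
      define q where "q = t / \<delta>"
      define K where "K = CH * T + 2 * \<Lambda> + 6 * Cinner pn"
      have q0: "0 \<le> q" using tp d by (simp add: q_def)
      have N: "N = \<Lambda> + Cinner pn + 3 * (Cinner pn * q)" unfolding N_def q_def by (simp add: algebra_simps)
      have Kq: "K * (1 + q) = CH * T + 2 * \<Lambda> + 6 * Cinner pn + (CH * T * q + 2 * (\<Lambda> * q) + 6 * (Cinner pn * q))"
        unfolding K_def by (simp add: algebra_simps)
      have p1: "0 \<le> CH * T * q" using CH_pos T q0 by simp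
      have p2: "0 \<le> \<Lambda> * q" using Lpos q0 by simp
      have p3: "0 \<le> Cinner pn" using Cinner_pos[OF pn(2)] by simp
      have "(CH * t powr \<alpha>) * (T * (2 * t) powr (s - (s+\<alpha>))) + 1 * N + 1 * N \<le> K * (1 + q)"
        unfolding Kq using X N p1 p2 p3 by linarith
      also have "\<dots> \<le> K * (4 * Ef \<delta> t)"
        using Ef_ge2[OF d t2] CH_pos T Lpos Cinner_pos[OF pn(2)] unfolding K_def q_def by (intro mult_left_mono) auto
      also have "\<dots> \<le> Cmain * Ef \<delta> t"
      proof -
        have "0 \<le> Ef \<delta> t" using Ef_ge1[OF d t0] by (meson order_trans powr_ge_zero)
        then have "0 \<le> CH * (\<Lambda> + T) * Ef \<delta> t" using CH_pos Lpos T by simp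
        moreover have "Cmain * Ef \<delta> t = CH * (\<Lambda> + T) * Ef \<delta> t + K * (4 * Ef \<delta> t)"
          unfolding Cmain_def K_def T_def by (simp only: ring_distribs mult_ac)
        ultimately show ?thesis by linarith
      qed
      finally show ?thesis .
    qed
    then have "ennreal ((CH * t powr \<alpha>) * (T * (2 * t) powr (s - (s+\<alpha>))) + 1 * N + 1 * N) \<le> ennreal (Cmain * Ef \<delta> t)"
      by (rule ennreal_leI)
    finally show ?thesis by (simp add: t_def)
  qed
qed

end


lemma vec_ofreal: "(\<chi> i. complex_of_real a * (v::complex^'m) $ i) = a *\<^sub>R v"
  by (simp add: vec_eq_iff) (simp add: scaleR_conv_of_real)

context nicem begin

lemma Kd_le: "0 < \<delta> \<Longrightarrow> norm (Kd \<Omega> s \<delta> u) \<le> \<delta> powr (-s)"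
  using Kd_norm[of \<delta> u] powr_mono2'[of "-s" \<delta> "max \<delta> (norm u)"] s_pos by simp

lemma Ker_le: "0 < r \<Longrightarrow> r \<le> norm u \<Longrightarrow> norm (Ker \<Omega> s u) \<le> r powr (-s)"
  using Ker_norm[of u] powr_mono2'[of "-s" r "norm u"] s_pos by simp

lemma int_bsupp:
  fixes f :: "real^'n \<Rightarrow> 'b::{banach, second_countable_topology}"
  assumes [measurable]: "f \<in> borel_measurable borel" and K: "compact K"
    and supp: "\<And>y. f y \<noteq> 0 \<Longrightarrow> y \<in> K" and b: "\<And>y. norm (f y) \<le> b"
  shows "integrable \<mu> f"
proof (rule integrableI_bounded_set[where A=K and B=b])
  show "K \<in> sets \<mu>" using K by (simp add: sets_mu compact_imp_closed borel_closed)
  show "emeasure \<mu> K < \<infinity>" using K by (intro bounded_fin compact_imp_bounded) (simp_all add: compact_imp_closed borel_closed)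
qed (use supp b in auto)

lemma Tdelta_eq: "Tdelta \<Omega> s \<mu> \<delta> (\<lambda>y. complex_of_real (\<phi> y)) x = (\<integral>y. \<phi> y *\<^sub>R Kd \<Omega> s \<delta> (x - y) \<partial>\<mu>)"
  unfolding Tdelta_def by (simp add: vec_ofreal)

end

locale setting = nicem \<Omega> s \<alpha> \<mu> \<Lambda> for \<Omega> :: "real^'n \<Rightarrow> complex^'m" and s \<alpha> :: real and \<mu> \<Lambda> +
  fixes \<eta> :: "real^'n \<Rightarrow> real" and B' :: "(real^'n) set"
  assumes eadm: "eta_adm \<mu> B' \<eta>"
begin

definition "Keta = closure {z. \<eta> z \<noteq> 0}"

lemma eta_nonneg: "0 \<le> \<eta> z" using eadm unfolding eta_adm_def by blast
lemma Keta_compact: "compact Keta" using eadm unfolding eta_adm_def Keta_def by blast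
lemma Keta_sub: "Keta \<subseteq> B'" using eadm unfolding eta_adm_def Keta_def by blast
lemma eta_integral: "integral\<^sup>L \<mu> \<eta> = 1" using eadm unfolding eta_adm_def by blast
lemma eta_supp: "\<eta> z \<noteq> 0 \<Longrightarrow> z \<in> Keta" unfolding Keta_def by (simp add: closure_def)
lemma eta_suppB: "\<eta> z \<noteq> 0 \<Longrightarrow> z \<in> B'" using eta_supp Keta_sub by blast

definition "Leta = (SOME L. L-lipschitz_on UNIV \<eta>)"
lemma eta_lip: "Leta-lipschitz_on UNIV \<eta>"
proof -
  have "\<exists>L. L-lipschitz_on UNIV \<eta>" using eadm unfolding eta_adm_def by blast
  from someI_ex[OF this] show ?thesis unfolding Leta_def .
qed
lemma Leta_nonneg: "0 \<le> Leta" using eta_lip by (simp add: lipschitz_on_def)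
lemma eta_lipD: "\<bar>\<eta> z - \<eta> y\<bar> \<le> Leta * dist z y"
  using eta_lip by (simp add: lipschitz_on_def dist_real_def)

lemma eta_cont: "continuous_on UNIV \<eta>" by (rule lipschitz_on_continuous_on[OF eta_lip])
lemma eta_meas[measurable]: "\<eta> \<in> borel_measurable borel" by (rule borel_measurable_continuous_onI[OF eta_cont])

lemma eta_int: "integrable \<mu> \<eta>"
  using eta_integral not_integrable_integral_eq by force

lemma eta_bdd_ex: "\<exists>M. \<forall>z. \<eta> z \<le> M"
proof -
  have c: "continuous_on Keta \<eta>" using continuous_on_subset[OF eta_cont] by blast
  have "compact (\<eta> ` Keta)" using compact_continuous_image[OF c Keta_compact] .
  then have "bounded (\<eta> ` Keta)" by (rule compact_imp_bounded)
  then obtain a where a: "\<forall>v\<in>\<eta> ` Keta. norm v \<le> a" unfolding bounded_iff by blast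
  have "\<eta> z \<le> max a 0" for z
  proof (cases "\<eta> z = 0")
    case False then have z: "z \<in> Keta" by (rule eta_supp)
    have "\<eta> z \<in> \<eta> ` Keta" using z by (rule imageI)
    then have "norm (\<eta> z) \<le> a" using a by blast
    then show ?thesis by simp
  qed simp
  then show ?thesis by blast
qed

definition "Meta = (SOME M. \<forall>z. \<eta> z \<le> M)"
lemma eta_le: "\<eta> z \<le> Meta" unfolding Meta_def using someI_ex[OF eta_bdd_ex] by blast
lemma Meta_nonneg: "0 \<le> Meta" using eta_le[of z] eta_nonneg[of z] by simp

lemma eta_int_bound:
  fixes F :: "real^'n \<Rightarrow> complex^'m"
  assumes int: "integrable \<mu> (\<lambda>z. \<eta> z *\<^sub>R F z)" and b: "\<And>z. \<eta> z \<noteq> 0 \<Longrightarrow> norm (F z) \<le> b"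
  shows "norm (\<integral>z. \<eta> z *\<^sub>R F z \<partial>\<mu>) \<le> b"
proof -
  have "norm (\<integral>z. \<eta> z *\<^sub>R F z \<partial>\<mu>) \<le> (\<integral>z. norm (\<eta> z *\<^sub>R F z) \<partial>\<mu>)" by (rule integral_norm_bound)
  also have "\<dots> \<le> (\<integral>z. \<eta> z * b \<partial>\<mu>)"
  proof (rule integral_mono)
    show "integrable \<mu> (\<lambda>z. \<eta> z * b)" using eta_int by simp
    fix z show "norm (\<eta> z *\<^sub>R F z) \<le> \<eta> z * b"
    proof (cases "\<eta> z = 0")
      case False
      have "norm (\<eta> z *\<^sub>R F z) = \<eta> z * norm (F z)" using eta_nonneg[of z] by simp
      also have "\<dots> \<le> \<eta> z * b" using b[OF False] eta_nonneg[of z] by (rule mult_left_mono)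
      finally show ?thesis .
    qed simp
  qed (use integrable_norm[OF int] in simp)
  also have "\<dots> = b" using eta_integral by simp
  finally show ?thesis .
qed

definition Q :: "real^'n \<Rightarrow> complex^'m" where
  "Q y = (\<integral>z. \<eta> z *\<^sub>R Ker \<Omega> s (z - y) \<partial>\<mu>)"

lemma Q_meas[measurable]: "Q \<in> borel_measurable borel"
  unfolding Q_def by measurable

lemma Q_int_bound:
  assumes r: "0 < r" and far: "\<And>z. \<eta> z \<noteq> 0 \<Longrightarrow> r \<le> dist z y"
  shows "integrable \<mu> (\<lambda>z. \<eta> z *\<^sub>R Ker \<Omega> s (z - y))" and "norm (Q y) \<le> r powr (-s)"
proof -
  have b: "norm (Ker \<Omega> s (z - y)) \<le> r powr (-s)" if "\<eta> z \<noteq> 0" for z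
    using Ker_le[OF r] far[OF that] by (simp add: dist_norm)
  show int: "integrable \<mu> (\<lambda>z. \<eta> z *\<^sub>R Ker \<Omega> s (z - y))"
  proof (rule int_bsupp[OF _ Keta_compact])
    fix z show "norm (\<eta> z *\<^sub>R Ker \<Omega> s (z - y)) \<le> Meta * r powr (-s)"
      using b[of z] eta_le[of z] eta_nonneg[of z] Meta_nonneg by (cases "\<eta> z = 0") (auto intro: mult_mono)
  qed (auto intro: eta_supp)
  show "norm (Q y) \<le> r powr (-s)" unfolding Q_def using int b by (rule eta_int_bound)
qed

lemma phi_ex: "phi_adm \<mu> B' x B \<phi> \<Longrightarrow> \<exists>c r. 0 < r \<and> (\<forall>y\<in>ball c (2 * r). \<phi> y = 1) \<and> x \<in> ball c r \<and> B' \<subseteq> ball c r"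
  unfolding phi_adm_def by blast

lemma phi_basic: "phi_adm \<mu> B' x B \<phi> \<Longrightarrow> \<phi> \<in> borel_measurable borel \<and> compact (closure {y. \<phi> y \<noteq> 0}) \<and> (\<forall>y. 0 \<le> \<phi> y \<and> \<phi> y \<le> 1)"
  unfolding phi_adm_def by blast

lemma far:
  assumes "B' \<subseteq> ball c r" "\<eta> z \<noteq> 0" "y \<notin> ball c (2 * r)"
  shows "r \<le> dist z y"
proof -
  have "z \<in> ball c r" using assms(1) eta_suppB[OF assms(2)] by blast
  then have "dist c z < r" by simp
  moreover have "2 * r \<le> dist c y" using assms(3) by simp
  moreover have "dist c y \<le> dist c z + dist z y" by (rule dist_triangle)
  ultimately show ?thesis by linarith
qed

lemma supp_phi: "\<phi> y \<noteq> 0 \<Longrightarrow> y \<in> closure {y. \<phi> y \<noteq> 0}"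
  by (simp add: closure_def)

context
  fixes x :: "real^'n" and B and \<phi> :: "real^'n \<Rightarrow> real" and \<delta> :: real
  assumes padm: "phi_adm \<mu> B' x B \<phi>" and dpos: "0 < \<delta>"
begin

lemma phi_meas[measurable]: "\<phi> \<in> borel_measurable borel"
  using phi_basic[OF padm] by blast

lemma T1: "integrable \<mu> (\<lambda>y. \<phi> y *\<^sub>R Kd \<Omega> s \<delta> (x - y))"
proof -
  have P: "compact (closure {y. \<phi> y \<noteq> 0})" "\<And>y. 0 \<le> \<phi> y" "\<And>y. \<phi> y \<le> 1"
    using phi_basic[OF padm] by blast+
  show ?thesis
  proof (rule int_bsupp[OF _ P(1)])
    fix y show "norm (\<phi> y *\<^sub>R Kd \<Omega> s \<delta> (x - y)) \<le> 1 * \<delta> powr (-s)"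
      using mult_mono[OF P(3)[of y] Kd_le[OF dpos, of "x - y"]] P(2)[of y] by simp
  qed (auto intro: supp_phi)
qed

lemma Q_far_diff:
  assumes r: "0 < r" and far: "\<And>z. \<eta> z \<noteq> 0 \<Longrightarrow> r \<le> dist z y" and 
    xz: "\<And>z. \<eta> z \<noteq> 0 \<Longrightarrow> dist x z \<le> 2 * r" and d: "max \<delta> (4 * r) \<le> dist x y"
  shows "norm (Kd \<Omega> s \<delta> (x - y) - Q y) \<le> CH * (2 * r) powr \<alpha> * dist x y powr (-(s+\<alpha>))"
proof -
  have int: "integrable \<mu> (\<lambda>z. \<eta> z *\<^sub>R Ker \<Omega> s (z - y))" by (rule Q_int_bound(1)[OF r far])
  have K: "Kd \<Omega> s \<delta> (x - y) = Ker \<Omega> s (x - y)" using d by (intro Kd_eq_Ker) (simp add: dist_norm)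
  have "Q y - Ker \<Omega> s (x - y) = (\<integral>z. \<eta> z *\<^sub>R Ker \<Omega> s (z - y) \<partial>\<mu>) - (\<integral>z. \<eta> z *\<^sub>R Ker \<Omega> s (x - y) \<partial>\<mu>)"
    using eta_int eta_integral by (simp add: Q_def)
  also have "\<dots> = (\<integral>z. \<eta> z *\<^sub>R (Ker \<Omega> s (z - y) - Ker \<Omega> s (x - y)) \<partial>\<mu>)"
    using int eta_int by (simp add: scaleR_diff_right)
  finally have eq: "Q y - Ker \<Omega> s (x - y) = (\<integral>z. \<eta> z *\<^sub>R (Ker \<Omega> s (z - y) - Ker \<Omega> s (x - y)) \<partial>\<mu>)" .
  have "norm (\<integral>z. \<eta> z *\<^sub>R (Ker \<Omega> s (z - y) - Ker \<Omega> s (x - y)) \<partial>\<mu>) \<le> CH * (2 * r) powr \<alpha> * dist x y powr (-(s+\<alpha>))"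
  proof (rule eta_int_bound)
    show "integrable \<mu> (\<lambda>z. \<eta> z *\<^sub>R (Ker \<Omega> s (z - y) - Ker \<Omega> s (x - y)))"
      using int eta_int by (simp add: scaleR_diff_right)
    fix z assume z: "\<eta> z \<noteq> 0"
    have dz: "r \<le> norm (z - y)" using far[OF z] by (simp add: dist_norm)
    have dx: "r \<le> norm (x - y)" using d r by (simp add: dist_norm)
    have e1: "Ker \<Omega> s (z - y) = Kd \<Omega> s r (z - y)" using dz by (simp add: Kd_eq_Ker)
    have e2: "Ker \<Omega> s (x - y) = Kd \<Omega> s r (x - y)" using dx by (simp add: Kd_eq_Ker)
    have mx: "max r (norm (x - y)) = dist x y" using dx by (simp add: dist_norm)
    have h: "norm ((x - y) - (z - y)) \<le> max r (norm (x - y)) / 2"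
      using xz[OF z] d unfolding mx by (simp add: dist_norm)
    have "norm (Kd \<Omega> s r (x - y) - Kd \<Omega> s r (z - y)) \<le> CH * norm ((x - y) - (z - y)) powr \<alpha> * max r (norm (x - y)) powr (-s-\<alpha>)"
      by (rule Kd_hold[OF r h])
    also have "\<dots> \<le> CH * (2 * r) powr \<alpha> * dist x y powr (-(s+\<alpha>))"
    proof -
      have "norm ((x - y) - (z - y)) powr \<alpha> \<le> (2 * r) powr \<alpha>"
        using xz[OF z] a_pos by (intro powr_mono2) (auto simp: dist_norm)
      then have "CH * norm ((x - y) - (z - y)) powr \<alpha> \<le> CH * (2 * r) powr \<alpha>"
        using CH_pos by simp
      moreover have "-s-\<alpha> = -(s+\<alpha>)" by simp
      ultimately show ?thesis unfolding mx by (simp add: mult_right_mono)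
    qed
    finally show "norm (Ker \<Omega> s (z - y) - Ker \<Omega> s (x - y)) \<le> CH * (2 * r) powr \<alpha> * dist x y powr (-(s+\<alpha>))"
      unfolding e1 e2 by (simp add: norm_minus_commute)
  qed
  then have "norm (Q y - Ker \<Omega> s (x - y)) \<le> CH * (2 * r) powr \<alpha> * dist x y powr (-(s+\<alpha>))" unfolding eq .
  moreover have "norm (Ker \<Omega> s (x - y) - Q y) = norm (Q y - Ker \<Omega> s (x - y))" by (rule norm_minus_commute)
  ultimately show ?thesis unfolding K by simp
qed

lemma T2: "integrable \<mu> (\<lambda>y. (1 - \<phi> y) *\<^sub>R (Kd \<Omega> s \<delta> (x - y) - Q y))"
proof -
  obtain c r where P0: "0 < r" "\<forall>y\<in>ball c (2 * r). \<phi> y = 1" "x \<in> ball c r" "B' \<subseteq> ball c r"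
    using phi_ex[OF padm] by blast
  have P: "0 < r" "\<And>y. y \<in> ball c (2 * r) \<Longrightarrow> \<phi> y = 1" "x \<in> ball c r" "B' \<subseteq> ball c r"
     "\<And>y. 0 \<le> \<phi> y" "\<And>y. \<phi> y \<le> 1"
    using P0 phi_basic[OF padm] by blast+
  define A where "A = max \<delta> (4 * r)"
  have A: "0 < A" using dpos by (simp add: A_def)
  have "(\<integral>\<^sup>+y. ennreal (norm ((1 - \<phi> y) *\<^sub>R (Kd \<Omega> s \<delta> (x - y) - Q y))) \<partial>\<mu>)
     \<le> ennreal ((\<delta> powr (-s) + r powr (-s)) * (\<Lambda> * A powr s) + (CH * (2 * r) powr \<alpha>) * (Ctail (s+\<alpha>) * A powr (s - (s+\<alpha>))) + 0 * 0)"
  proof (rule nn3[where gc="\<lambda>_. 0"])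
    fix y
    show "norm ((1 - \<phi> y) *\<^sub>R (Kd \<Omega> s \<delta> (x - y) - Q y)) \<le> (\<delta> powr (-s) + r powr (-s)) * indicator (ball x A) y
       + (CH * (2 * r) powr \<alpha>) * (indicator (- ball x A) y * dist x y powr (-(s+\<alpha>))) + 0 * 0"
    proof (cases "y \<in> ball c (2 * r)")
      case True then show ?thesis using P(2) CH_pos by (simp add: indicator_def)
    next
      case False
      have fz: "\<And>z. \<eta> z \<noteq> 0 \<Longrightarrow> r \<le> dist z y" using far[OF P(4) _ False] by blast
      have ph: "\<bar>1 - \<phi> y\<bar> \<le> 1" using P(5,6)[of y] by simp
      have n1: "norm ((1 - \<phi> y) *\<^sub>R (Kd \<Omega> s \<delta> (x - y) - Q y)) \<le> norm (Kd \<Omega> s \<delta> (x - y) - Q y)"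
        using ph by (simp add: mult_left_le_one_le)
      show ?thesis
      proof (cases "dist x y < A")
        case True
        have "norm (Q y) \<le> r powr (-s)" using Q_int_bound(2)[OF P(1) fz] by blast
        then have "norm (Kd \<Omega> s \<delta> (x - y) - Q y) \<le> \<delta> powr (-s) + r powr (-s)"
          using Kd_le[OF dpos, of "x - y"] norm_triangle_ineq4[of "Kd \<Omega> s \<delta> (x - y)" "Q y"] by linarith
        then show ?thesis using True n1 by (simp add: indicator_def)
      next
        case False
        have xz: "dist x z \<le> 2 * r" if "\<eta> z \<noteq> 0" for z
        proof -
          have "z \<in> ball c r" using that eta_suppB P(4) by blast
          then show ?thesis using P(3) dist_triangle[of x z c] by (simp add: dist_commute)
        qed
        have "norm (Kd \<Omega> s \<delta> (x - y) - Q y) \<le> CH * (2 * r) powr \<alpha> * dist x y powr (-(s+\<alpha>))"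
          by (rule Q_far_diff[OF P(1) fz xz]) (use False in \<open>auto simp: A_def not_less\<close>)
        then show ?thesis using False n1 by (simp add: indicator_def)
      qed
    qed
  qed (use A P(1) dpos CH_pos Lpos a_pos Ctail_pos[of "s+\<alpha>"] tail[OF A, of "s+\<alpha>" x] in \<open>auto intro: ind_ball_int add_nonneg_nonneg\<close>)
  also have "\<dots> < \<infinity>" by simp
  finally show ?thesis by (intro integrableI_bounded) auto
qed

lemma T3: "Ttilde \<Omega> s \<mu> \<eta> \<delta> \<phi> x = (\<integral>y. Kd \<Omega> s \<delta> (x - y) - (1 - \<phi> y) *\<^sub>R Q y \<partial>\<mu>) - TmuPair \<Omega> s \<mu> \<phi> \<eta>"
proof -
  obtain c r where P: "0 < r" "\<forall>y\<in>ball c (2 * r). \<phi> y = 1" "x \<in> ball c r" "B' \<subseteq> ball c r"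
    using phi_ex[OF padm] by blast
  have inner: "(1 - \<phi> y) *\<^sub>R (\<integral>z. \<eta> z *\<^sub>R (Kd \<Omega> s \<delta> (x - y) - Ker \<Omega> s (z - y)) \<partial>\<mu>) = (1 - \<phi> y) *\<^sub>R (Kd \<Omega> s \<delta> (x - y) - Q y)" for y
  proof (cases "y \<in> ball c (2 * r)")
    case False
    have fz: "\<And>z. \<eta> z \<noteq> 0 \<Longrightarrow> r \<le> dist z y" using far[OF P(4) _ False] by blast
    have int: "integrable \<mu> (\<lambda>z. \<eta> z *\<^sub>R Ker \<Omega> s (z - y))" by (rule Q_int_bound(1)[OF P(1) fz])
    have "(\<integral>z. \<eta> z *\<^sub>R (Kd \<Omega> s \<delta> (x - y) - Ker \<Omega> s (z - y)) \<partial>\<mu>)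
        = (\<integral>z. \<eta> z *\<^sub>R Kd \<Omega> s \<delta> (x - y) - \<eta> z *\<^sub>R Ker \<Omega> s (z - y) \<partial>\<mu>)"
      by (simp add: scaleR_diff_right)
    also have "\<dots> = (\<integral>z. \<eta> z *\<^sub>R Kd \<Omega> s \<delta> (x - y) \<partial>\<mu>) - Q y"
      unfolding Q_def using Bochner_Integration.integral_diff[OF integrable_scaleR_left[OF eta_int] int] by simp
    also have "(\<integral>z. \<eta> z *\<^sub>R Kd \<Omega> s \<delta> (x - y) \<partial>\<mu>) = Kd \<Omega> s \<delta> (x - y)"
      using eta_int eta_integral by simp
    finally show ?thesis by simp
  qed (use P(2) in simp)
  have "Ttilde \<Omega> s \<mu> \<eta> \<delta> \<phi> x = (\<integral>y. \<phi> y *\<^sub>R Kd \<Omega> s \<delta> (x - y) \<partial>\<mu>) - TmuPair \<Omega> s \<mu> \<phi> \<eta>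
      + (\<integral>y. (1 - \<phi> y) *\<^sub>R (Kd \<Omega> s \<delta> (x - y) - Q y) \<partial>\<mu>)"
    unfolding Ttilde_def Tdelta_eq inner ..
  also have "\<dots> = (\<integral>y. \<phi> y *\<^sub>R Kd \<Omega> s \<delta> (x - y) + (1 - \<phi> y) *\<^sub>R (Kd \<Omega> s \<delta> (x - y) - Q y) \<partial>\<mu>) - TmuPair \<Omega> s \<mu> \<phi> \<eta>"
    using T1 T2 by (simp add: Bochner_Integration.integral_add)
  also have "(\<lambda>y. \<phi> y *\<^sub>R Kd \<Omega> s \<delta> (x - y) + (1 - \<phi> y) *\<^sub>R (Kd \<Omega> s \<delta> (x - y) - Q y)) = (\<lambda>y. Kd \<Omega> s \<delta> (x - y) - (1 - \<phi> y) *\<^sub>R Q y)"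
    by (simp add: algebra_simps)
  finally show ?thesis .
qed

lemma F_int: "integrable \<mu> (\<lambda>y. Kd \<Omega> s \<delta> (x - y) - (1 - \<phi> y) *\<^sub>R Q y)"
proof -
  have "integrable \<mu> (\<lambda>y. \<phi> y *\<^sub>R Kd \<Omega> s \<delta> (x - y) + (1 - \<phi> y) *\<^sub>R (Kd \<Omega> s \<delta> (x - y) - Q y))"
    using Bochner_Integration.integrable_add[OF T1 T2] by simp
  also have "(\<lambda>y. \<phi> y *\<^sub>R Kd \<Omega> s \<delta> (x - y) + (1 - \<phi> y) *\<^sub>R (Kd \<Omega> s \<delta> (x - y) - Q y)) = (\<lambda>y. Kd \<Omega> s \<delta> (x - y) - (1 - \<phi> y) *\<^sub>R Q y)"
    by (simp add: algebra_simps)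
  finally show ?thesis .
qed


end

lemma Kd_swap: "Kd \<Omega> s \<delta> (b - a) = - Kd \<Omega> s \<delta> (a - b)"
  using Kd_odd[of \<delta> "a - b"] by simp

lemma int2_bsupp:
  fixes f :: "(real^'n) \<times> (real^'n) \<Rightarrow> complex^'m"
  assumes [measurable]: "f \<in> borel_measurable (\<mu> \<Otimes>\<^sub>M \<mu>)" and K: "compact K1" "compact K2"
    and supp: "\<And>p. f p \<noteq> 0 \<Longrightarrow> p \<in> K1 \<times> K2" and b: "\<And>p. norm (f p) \<le> b"
  shows "integrable (\<mu> \<Otimes>\<^sub>M \<mu>) f"
proof (rule integrableI_bounded_set[where A="K1 \<times> K2" and B=b])
  have s1: "K1 \<in> sets \<mu>" "K2 \<in> sets \<mu>" using K by (simp_all add: sets_mu compact_imp_closed borel_closed)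
  then show "K1 \<times> K2 \<in> sets (\<mu> \<Otimes>\<^sub>M \<mu>)" by (rule pair_measureI)
  have f1: "emeasure \<mu> K1 < \<infinity>" "emeasure \<mu> K2 < \<infinity>"
    using K by (intro bounded_fin compact_imp_bounded; simp add: compact_imp_closed borel_closed)+
  show "emeasure (\<mu> \<Otimes>\<^sub>M \<mu>) (K1 \<times> K2) < \<infinity>"
    using f1 by (simp add: sf.emeasure_pair_measure_Times[OF s1] ennreal_mult_less_top)
qed (use supp b in auto)

lemma T1gen:
  assumes padm: "phi_adm \<mu> B' x B \<phi>" and dpos: "0 < \<delta>"
  shows "integrable \<mu> (\<lambda>y. \<phi> y *\<^sub>R Kd \<Omega> s \<delta> (z - y))"
proof -
  have P: "compact (closure {y. \<phi> y \<noteq> 0})" "\<And>y. 0 \<le> \<phi> y" "\<And>y. \<phi> y \<le> 1" "\<phi> \<in> borel_measurable borel"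
    using phi_basic[OF padm] by blast+
  show ?thesis
  proof (rule int_bsupp[OF _ P(1)])
    fix y show "norm (\<phi> y *\<^sub>R Kd \<Omega> s \<delta> (z - y)) \<le> 1 * \<delta> powr (-s)"
      using mult_mono[OF P(3)[of y] Kd_le[OF dpos, of "z - y"]] P(2)[of y] by simp
  qed (use P(4) in \<open>auto intro: supp_phi\<close>)
qed

lemma Tbound:
  assumes padm: "phi_adm \<mu> B' x B \<phi>" and dpos: "0 < \<delta>"
  shows "\<exists>b. \<forall>z. norm (\<integral>y. \<phi> y *\<^sub>R Kd \<Omega> s \<delta> (z - y) \<partial>\<mu>) \<le> b"
proof -
  define S where "S = closure {y. \<phi> y \<noteq> 0}"
  have P: "compact S" "\<And>y. 0 \<le> \<phi> y" "\<And>y. \<phi> y \<le> 1" "\<phi> \<in> borel_measurable borel"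
    using phi_basic[OF padm] unfolding S_def by blast+
  have Ss: "S \<in> sets \<mu>" using P(1) by (simp add: sets_mu compact_imp_closed borel_closed)
  have Sf: "emeasure \<mu> S < \<infinity>" using P(1) by (intro bounded_fin compact_imp_bounded) (simp_all add: compact_imp_closed borel_closed)
  have "norm (\<integral>y. \<phi> y *\<^sub>R Kd \<Omega> s \<delta> (z - y) \<partial>\<mu>) \<le> \<delta> powr (-s) * measure \<mu> S" for z
  proof -
    have "norm (\<integral>y. \<phi> y *\<^sub>R Kd \<Omega> s \<delta> (z - y) \<partial>\<mu>) \<le> (\<integral>y. norm (\<phi> y *\<^sub>R Kd \<Omega> s \<delta> (z - y)) \<partial>\<mu>)"
      by (rule integral_norm_bound)
    also have "\<dots> \<le> (\<integral>y. \<delta> powr (-s) * indicator S y \<partial>\<mu>)"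
    proof (rule integral_mono)
      show "integrable \<mu> (\<lambda>y. norm (\<phi> y *\<^sub>R Kd \<Omega> s \<delta> (z - y)))" by (rule integrable_norm[OF T1gen[OF padm dpos]])
      show "integrable \<mu> (\<lambda>y. \<delta> powr (-s) * indicator S y)" using Ss Sf by simp
      fix y
      show "norm (\<phi> y *\<^sub>R Kd \<Omega> s \<delta> (z - y)) \<le> \<delta> powr (-s) * indicator S y"
      proof (cases "\<phi> y = 0")
        case False
        then have "y \<in> S" unfolding S_def by (rule supp_phi)
        then show ?thesis using mult_mono[OF P(3)[of y] Kd_le[OF dpos, of "z - y"]] P(2)[of y] by simp
      qed simp
    qed
    also have "\<dots> = \<delta> powr (-s) * measure \<mu> S" by simp
    finally show ?thesis .
  qed
  then show ?thesis by blast
qed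

lemma sep:
  assumes p1: "phi_adm \<mu> B' x1 B1 \<phi>1" and p2: "phi_adm \<mu> B' x2 B2 \<phi>2"
  shows "\<exists>r0>0. \<forall>z y. \<eta> z \<noteq> 0 \<longrightarrow> \<phi>1 y \<noteq> \<phi>2 y \<longrightarrow> r0 \<le> dist z y"
proof -
  obtain c1 r1 where P1: "0 < r1" "\<forall>y\<in>ball c1 (2 * r1). \<phi>1 y = 1" "B' \<subseteq> ball c1 r1"
    using phi_ex[OF p1] by blast
  obtain c2 r2 where P2: "0 < r2" "\<forall>y\<in>ball c2 (2 * r2). \<phi>2 y = 1" "B' \<subseteq> ball c2 r2"
    using phi_ex[OF p2] by blast
  have "min r1 r2 \<le> dist z y" if "\<eta> z \<noteq> 0" "\<phi>1 y \<noteq> \<phi>2 y" for z y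
  proof (cases "y \<in> ball c1 (2 * r1)")
    case True
    then have "y \<notin> ball c2 (2 * r2)" using that(2) P1(2) P2(2) by auto
    then have "r2 \<le> dist z y" by (rule far[OF P2(3) that(1)])
    then show ?thesis by simp
  next
    case False
    then have "r1 \<le> dist z y" by (rule far[OF P1(3) that(1)])
    then show ?thesis by simp
  qed
  then show ?thesis using P1(1) P2(1) by (intro exI[of _ "min r1 r2"]) auto
qed

definition gfun :: "(real^'n \<Rightarrow> real) \<Rightarrow> real \<Rightarrow> complex^'m" where
  "gfun \<phi> \<delta> = (\<integral>z. \<eta> z *\<^sub>R Tdelta \<Omega> s \<mu> \<delta> (\<lambda>y. complex_of_real (\<phi> y)) z \<partial>\<mu>)"

lemma TmuPair_gfun: "TmuPair \<Omega> s \<mu> \<phi> \<eta> = Lim (at_right 0) (gfun \<phi>)"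
  unfolding TmuPair_def gfun_def ..

lemma gfun_eq: "gfun \<phi> \<delta> = (\<integral>z. \<eta> z *\<^sub>R (\<integral>y. \<phi> y *\<^sub>R Kd \<Omega> s \<delta> (z - y) \<partial>\<mu>) \<partial>\<mu>)"
  unfolding gfun_def Tdelta_eq ..

lemma DQ_int:
  assumes p1: "phi_adm \<mu> B' x1 B1 \<phi>1" and p2: "phi_adm \<mu> B' x2 B2 \<phi>2"
  shows "integrable \<mu> (\<lambda>y. (\<phi>1 y - \<phi>2 y) *\<^sub>R Q y)"
proof -
  obtain r0 where r0: "0 < r0" "\<And>z y. \<eta> z \<noteq> 0 \<Longrightarrow> \<phi>1 y \<noteq> \<phi>2 y \<Longrightarrow> r0 \<le> dist z y"
    using sep[OF p1 p2] by blast
  have P1: "compact (closure {y. \<phi>1 y \<noteq> 0})" "\<And>y. 0 \<le> \<phi>1 y" "\<And>y. \<phi>1 y \<le> 1" "\<phi>1 \<in> borel_measurable borel"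
    using phi_basic[OF p1] by blast+
  have P2: "compact (closure {y. \<phi>2 y \<noteq> 0})" "\<And>y. 0 \<le> \<phi>2 y" "\<And>y. \<phi>2 y \<le> 1" "\<phi>2 \<in> borel_measurable borel"
    using phi_basic[OF p2] by blast+
  show ?thesis
  proof (rule int_bsupp[where K="closure {y. \<phi>1 y \<noteq> 0} \<union> closure {y. \<phi>2 y \<noteq> 0}" and b="r0 powr (-s)"])
    show "compact (closure {y. \<phi>1 y \<noteq> 0} \<union> closure {y. \<phi>2 y \<noteq> 0})" using P1(1) P2(1) by (rule compact_Un)
    fix y
    show "(\<phi>1 y - \<phi>2 y) *\<^sub>R Q y \<noteq> 0 \<Longrightarrow> y \<in> closure {y. \<phi>1 y \<noteq> 0} \<union> closure {y. \<phi>2 y \<noteq> 0}"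
      by (cases "\<phi>1 y = 0") (auto intro: supp_phi)
    show "norm ((\<phi>1 y - \<phi>2 y) *\<^sub>R Q y) \<le> r0 powr (-s)"
    proof (cases "\<phi>1 y = \<phi>2 y")
      case False
      have "norm (Q y) \<le> r0 powr (-s)" using Q_int_bound(2)[OF r0(1) r0(2)[OF _ False]] by blast
      moreover have "\<bar>\<phi>1 y - \<phi>2 y\<bar> \<le> 1" using P1(2,3)[of y] P2(2,3)[of y] by simp
      ultimately show ?thesis using mult_mono[of "\<bar>\<phi>1 y - \<phi>2 y\<bar>" 1 "norm (Q y)" "r0 powr (-s)"] by simp
    qed simp
  qed (use P1(4) P2(4) in simp)
qed

lemma P_diff:
  assumes p1: "phi_adm \<mu> B' x1 B1 \<phi>1" and p2: "phi_adm \<mu> B' x2 B2 \<phi>2"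
  shows "\<exists>r0>0. \<forall>\<delta>. 0 < \<delta> \<longrightarrow> \<delta> < r0 \<longrightarrow> gfun \<phi>1 \<delta> - gfun \<phi>2 \<delta> = (\<integral>y. (\<phi>1 y - \<phi>2 y) *\<^sub>R Q y \<partial>\<mu>)"
proof -
  obtain r0 where r0: "0 < r0" "\<And>z y. \<eta> z \<noteq> 0 \<Longrightarrow> \<phi>1 y \<noteq> \<phi>2 y \<Longrightarrow> r0 \<le> dist z y"
    using sep[OF p1 p2] by blast
  have P1: "compact (closure {y. \<phi>1 y \<noteq> 0})" "\<And>y. 0 \<le> \<phi>1 y" "\<And>y. \<phi>1 y \<le> 1" "\<phi>1 \<in> borel_measurable borel"
    using phi_basic[OF p1] by blast+
  have P2: "compact (closure {y. \<phi>2 y \<noteq> 0})" "\<And>y. 0 \<le> \<phi>2 y" "\<And>y. \<phi>2 y \<le> 1" "\<phi>2 \<in> borel_measurable borel"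
    using phi_basic[OF p2] by blast+
  note [measurable] = P1(4) P2(4)
  define D where "D y = \<phi>1 y - \<phi>2 y" for y
  have D[measurable]: "D \<in> borel_measurable borel" unfolding D_def by measurable
  have Db: "\<bar>D y\<bar> \<le> 1" for y using P1(2,3)[of y] P2(2,3)[of y] by (simp add: D_def)
  define H where "H z y = (\<eta> z * D y) *\<^sub>R Ker \<Omega> s (z - y)" for z y
  have Hint: "integrable (\<mu> \<Otimes>\<^sub>M \<mu>) (\<lambda>(z, y). H z y)"
  proof (rule int2_bsupp[OF _ Keta_compact compact_Un[OF P1(1) P2(1)], where b="Meta * r0 powr (-s)"])
    show "(\<lambda>(z, y). H z y) \<in> borel_measurable (\<mu> \<Otimes>\<^sub>M \<mu>)" unfolding H_def by measurable
    fix p :: "(real^'n) \<times> (real^'n)"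
    obtain z y where p: "p = (z, y)" by (cases p)
    show "(case p of (z, y) \<Rightarrow> H z y) \<noteq> 0 \<Longrightarrow> p \<in> Keta \<times> (closure {y. \<phi>1 y \<noteq> 0} \<union> closure {y. \<phi>2 y \<noteq> 0})"
      unfolding p H_def D_def by (cases "\<phi>1 y = 0") (auto intro: supp_phi eta_supp)
    show "norm (case p of (z, y) \<Rightarrow> H z y) \<le> Meta * r0 powr (-s)"
    proof (cases "\<eta> z = 0 \<or> D y = 0")
      case False
      then have "r0 \<le> norm (z - y)" using r0(2)[of z y] by (auto simp: D_def dist_norm)
      then have k: "norm (Ker \<Omega> s (z - y)) \<le> r0 powr (-s)" by (rule Ker_le[OF r0(1)])
      have "norm (H z y) = \<eta> z * \<bar>D y\<bar> * norm (Ker \<Omega> s (z - y))"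
        using eta_nonneg[of z] by (simp add: H_def abs_mult)
      also have "\<dots> \<le> Meta * 1 * r0 powr (-s)"
        using eta_le[of z] eta_nonneg[of z] Db[of y] k by (intro mult_mono) auto
      finally show ?thesis unfolding p by simp
    next
      case True then show ?thesis unfolding p H_def using Meta_nonneg by auto
    qed
  qed
  have "gfun \<phi>1 \<delta> - gfun \<phi>2 \<delta> = (\<integral>y. D y *\<^sub>R Q y \<partial>\<mu>)" if d: "0 < \<delta>" "\<delta> < r0" for \<delta>
  proof -
    define T1 where "T1 z = (\<integral>y. \<phi>1 y *\<^sub>R Kd \<Omega> s \<delta> (z - y) \<partial>\<mu>)" for z
    define T2 where "T2 z = (\<integral>y. \<phi>2 y *\<^sub>R Kd \<Omega> s \<delta> (z - y) \<partial>\<mu>)" for z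
    have T1m[measurable]: "T1 \<in> borel_measurable borel" unfolding T1_def by measurable
    have T2m[measurable]: "T2 \<in> borel_measurable borel" unfolding T2_def by measurable
    obtain b1 where b1: "\<And>z. norm (T1 z) \<le> b1" using Tbound[OF p1 d(1)] unfolding T1_def by blast
    obtain b2 where b2: "\<And>z. norm (T2 z) \<le> b2" using Tbound[OF p2 d(1)] unfolding T2_def by blast
    have ib: "integrable \<mu> (\<lambda>z. \<eta> z *\<^sub>R T z)" if Tm: "T \<in> borel_measurable borel" and Tb: "\<And>z. norm (T z) \<le> b" for T :: "real^'n \<Rightarrow> complex^'m" and b
    proof (rule int_bsupp[OF _ Keta_compact, where b="Meta * b"])
      fix z show "norm (\<eta> z *\<^sub>R T z) \<le> Meta * b"
        using eta_le[of z] eta_nonneg[of z] Tb[of z] by (simp add: mult_mono)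
    qed (use Tm in \<open>auto intro: eta_supp\<close>)
    have "gfun \<phi>1 \<delta> - gfun \<phi>2 \<delta> = (\<integral>z. \<eta> z *\<^sub>R T1 z \<partial>\<mu>) - (\<integral>z. \<eta> z *\<^sub>R T2 z \<partial>\<mu>)"
      unfolding gfun_eq T1_def T2_def ..
    also have "\<dots> = (\<integral>z. \<eta> z *\<^sub>R T1 z - \<eta> z *\<^sub>R T2 z \<partial>\<mu>)"
      using Bochner_Integration.integral_diff[OF ib[OF T1m b1] ib[OF T2m b2]] by simp
    also have "\<dots> = (\<integral>z. (\<integral>y. H z y \<partial>\<mu>) \<partial>\<mu>)"
    proof (rule Bochner_Integration.integral_cong[OF refl])
      fix z
      have "T1 z - T2 z = (\<integral>y. D y *\<^sub>R Kd \<Omega> s \<delta> (z - y) \<partial>\<mu>)"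
        unfolding T1_def T2_def D_def
        using Bochner_Integration.integral_diff[OF T1gen[OF p1 d(1), of z] T1gen[OF p2 d(1), of z]]
        by (simp add: scaleR_diff_left)
      have "\<eta> z *\<^sub>R T1 z - \<eta> z *\<^sub>R T2 z = \<eta> z *\<^sub>R (\<integral>y. D y *\<^sub>R Ker \<Omega> s (z - y) \<partial>\<mu>)"
      proof (cases "\<eta> z = 0")
        case False
        have "(\<integral>y. D y *\<^sub>R Kd \<Omega> s \<delta> (z - y) \<partial>\<mu>) = (\<integral>y. D y *\<^sub>R Ker \<Omega> s (z - y) \<partial>\<mu>)"
        proof (rule Bochner_Integration.integral_cong[OF refl])
          fix y show "D y *\<^sub>R Kd \<Omega> s \<delta> (z - y) = D y *\<^sub>R Ker \<Omega> s (z - y)"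
          proof (cases "D y = 0")
            case False
            then have "r0 \<le> dist z y" using r0(2)[OF \<open>\<eta> z \<noteq> 0\<close>] by (auto simp: D_def)
            then have "\<delta> \<le> norm (z - y)" using d by (simp add: dist_norm)
            then show ?thesis by (simp add: Kd_eq_Ker)
          qed simp
        qed
        then show ?thesis using \<open>T1 z - T2 z = _\<close> by (simp add: scaleR_diff_right[symmetric])
      qed simp
      also have "\<dots> = (\<integral>y. H z y \<partial>\<mu>)"
      proof -
        have "(\<lambda>y. H z y) = (\<lambda>y. \<eta> z *\<^sub>R (D y *\<^sub>R Ker \<Omega> s (z - y)))" by (simp add: H_def fun_eq_iff)
        then show ?thesis by (simp only: integral_scaleR_right)
      qed
      finally show "\<eta> z *\<^sub>R T1 z - \<eta> z *\<^sub>R T2 z = (\<integral>y. H z y \<partial>\<mu>)" .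
    qed
    also have "\<dots> = (\<integral>y. (\<integral>z. H z y \<partial>\<mu>) \<partial>\<mu>)"
      using pf.Fubini_integral[OF Hint] by simp
    also have "\<dots> = (\<integral>y. D y *\<^sub>R Q y \<partial>\<mu>)"
    proof (rule Bochner_Integration.integral_cong[OF refl])
      fix y
      have "(\<lambda>z. H z y) = (\<lambda>z. D y *\<^sub>R (\<eta> z *\<^sub>R Ker \<Omega> s (z - y)))"
        by (simp add: H_def fun_eq_iff mult.commute)
      then have "(\<integral>z. H z y \<partial>\<mu>) = (\<integral>z. D y *\<^sub>R (\<eta> z *\<^sub>R Ker \<Omega> s (z - y)) \<partial>\<mu>)"
        by simp
      also have "\<dots> = D y *\<^sub>R Q y" unfolding Q_def by (simp only: integral_scaleR_right)
      finally show "(\<integral>z. H z y \<partial>\<mu>) = D y *\<^sub>R Q y" .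
    qed
    finally show ?thesis .
  qed
  then show ?thesis using r0(1) unfolding D_def by blast
qed

lemma P_conv:
  assumes padm: "phi_adm \<mu> B' x B \<phi>"
  shows "\<exists>l. (gfun \<phi> \<longlongrightarrow> l) (at_right 0)"
proof -
  obtain c r where P0: "0 < r" "\<forall>y\<in>ball c (2 * r). \<phi> y = 1" "x \<in> ball c r" "B' \<subseteq> ball c r"
    using phi_ex[OF padm] by blast
  define S where "S = closure {y. \<phi> y \<noteq> 0}"
  have P: "compact S" "\<And>y. 0 \<le> \<phi> y" "\<And>y. \<phi> y \<le> 1" "\<phi> \<in> borel_measurable borel"
    using phi_basic[OF padm] unfolding S_def by blast+
  note [measurable] = P(4)
  have Ss[measurable]: "S \<in> sets borel" using P(1) by (simp add: compact_imp_closed borel_closed)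
  have Sf: "emeasure \<mu> S < \<infinity>" using P(1) by (intro bounded_fin compact_imp_bounded) (simp_all add: compact_imp_closed borel_closed)
  have suppS: "\<phi> y \<noteq> 0 \<Longrightarrow> y \<in> S" for y unfolding S_def by (rule supp_phi)
  have etaS: "\<eta> z \<noteq> 0 \<Longrightarrow> z \<in> S" for z
  proof -
    assume "\<eta> z \<noteq> 0"
    then have "z \<in> ball c r" using eta_suppB P0(4) by blast
    then have "\<phi> z = 1" using P0(2) P0(1) by auto
    then show "z \<in> S" using suppS by simp
  qed
  define W where "W \<delta> = (\<lambda>(z, y). (1/2::real) *\<^sub>R ((\<eta> z * \<phi> y - \<eta> y * \<phi> z) *\<^sub>R Kd \<Omega> s \<delta> (z - y)))" for \<delta>
  define W0 where "W0 = (\<lambda>(z, y). (1/2::real) *\<^sub>R ((\<eta> z * \<phi> y - \<eta> y * \<phi> z) *\<^sub>R Ker \<Omega> s (z - y)))"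
  define w where "w = (\<lambda>(z, y). (1/2) * \<bar>\<eta> z * \<phi> y - \<eta> y * \<phi> z\<bar> * dist z y powr (-s))"
  have Wm[measurable]: "W \<delta> \<in> borel_measurable (\<mu> \<Otimes>\<^sub>M \<mu>)" for \<delta> unfolding W_def by measurable
  have W0m[measurable]: "W0 \<in> borel_measurable (\<mu> \<Otimes>\<^sub>M \<mu>)" unfolding W0_def by measurable
  have wm[measurable]: "w \<in> borel_measurable (\<mu> \<Otimes>\<^sub>M \<mu>)" unfolding w_def by measurable
  have step1: "gfun \<phi> \<delta> = integral\<^sup>L (\<mu> \<Otimes>\<^sub>M \<mu>) (W \<delta>)" if d: "0 < \<delta>" for \<delta>
  proof -
    define G where "G = (\<lambda>(z, y). (\<eta> z * \<phi> y) *\<^sub>R Kd \<Omega> s \<delta> (z - y))"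
    define G' where "G' = (\<lambda>(z, y). (\<eta> y * \<phi> z) *\<^sub>R Kd \<Omega> s \<delta> (z - y))"
    have Gm[measurable]: "G \<in> borel_measurable (\<mu> \<Otimes>\<^sub>M \<mu>)" unfolding G_def by measurable
    have sw: "G (b, a) = - G' (a, b)" for a b
      unfolding G_def G'_def using Kd_swap[where a=a and b=b and \<delta>=\<delta>] by simp
    have Gint: "integrable (\<mu> \<Otimes>\<^sub>M \<mu>) G"
    proof (rule int2_bsupp[OF Gm Keta_compact P(1), where b="Meta * \<delta> powr (-s)"])
      fix p :: "(real^'n) \<times> (real^'n)"
      obtain z y where p: "p = (z, y)" by (cases p)
      show "G p \<noteq> 0 \<Longrightarrow> p \<in> Keta \<times> S" unfolding p G_def by (auto intro: eta_supp suppS)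
      have "norm (G p) = \<eta> z * \<phi> y * norm (Kd \<Omega> s \<delta> (z - y))"
        using eta_nonneg[of z] P(2)[of y] unfolding p G_def by simp
      also have "\<dots> \<le> Meta * 1 * \<delta> powr (-s)"
        using eta_le[of z] eta_nonneg[of z] P(2,3)[of y] Kd_le[OF d, of "z - y"] by (intro mult_mono) auto
      finally show "norm (G p) \<le> Meta * \<delta> powr (-s)" by simp
    qed
    have swap: "integral\<^sup>L (\<mu> \<Otimes>\<^sub>M \<mu>) G' = - integral\<^sup>L (\<mu> \<Otimes>\<^sub>M \<mu>) G"
    proof -
      have "integral\<^sup>L (\<mu> \<Otimes>\<^sub>M \<mu>) G = (\<integral>(z, y). G (y, z) \<partial>(\<mu> \<Otimes>\<^sub>M \<mu>))"
        using pf.integral_product_swap[OF Gm] by simp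
      also have "(\<lambda>(z, y). G (y, z)) = (\<lambda>p. - G' p)"
        by (rule ext) (auto simp: sw)
      finally show ?thesis by simp
    qed
    have G'int: "integrable (\<mu> \<Otimes>\<^sub>M \<mu>) G'"
    proof -
      have "integrable (\<mu> \<Otimes>\<^sub>M \<mu>) (\<lambda>(z, y). G (y, z))" using pf.integrable_product_swap[OF Gint] by simp
      then have "integrable (\<mu> \<Otimes>\<^sub>M \<mu>) (\<lambda>p. - (\<lambda>(z, y). G (y, z)) p)" by (rule integrable_minus)
      also have "(\<lambda>p. - (\<lambda>(z, y). G (y, z)) p) = G'"
        by (rule ext) (auto simp: sw)
      finally show ?thesis .
    qed
    have "gfun \<phi> \<delta> = (\<integral>z. (\<integral>y. G (z, y) \<partial>\<mu>) \<partial>\<mu>)"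
      unfolding gfun_eq G_def by (simp add: scaleR_scaleR[symmetric] del: scaleR_scaleR)
    also have "\<dots> = integral\<^sup>L (\<mu> \<Otimes>\<^sub>M \<mu>) G" by (rule pf.integral_fst'[OF Gint])
    also have "\<dots> = (1/2::real) *\<^sub>R (integral\<^sup>L (\<mu> \<Otimes>\<^sub>M \<mu>) G - integral\<^sup>L (\<mu> \<Otimes>\<^sub>M \<mu>) G')"
      unfolding swap by (simp add: scaleR_2[symmetric])
    also have "\<dots> = integral\<^sup>L (\<mu> \<Otimes>\<^sub>M \<mu>) (W \<delta>)"
    proof -
      have "W \<delta> = (\<lambda>p. (1/2::real) *\<^sub>R (G p - G' p))"
        by (auto simp: W_def G_def G'_def fun_eq_iff scaleR_diff_left)
      then show ?thesis using Bochner_Integration.integral_diff[OF Gint G'int] by simp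
    qed
    finally show ?thesis .
  qed
  define \<beta> where "\<beta> = min 1 (s / 2)"
  have \<beta>: "0 < \<beta>" "\<beta> \<le> 1" "\<beta> < s" using s_pos by (auto simp: \<beta>_def)
  obtain mS where mS: "emeasure \<mu> S = ennreal mS" "0 \<le> mS"
    using Sf by (metis ennreal_cases less_top infinity_ennreal_def ennreal_less_top emeasure_eq_ennreal_measure measure_nonneg)
  define K0 where "K0 = Meta * r powr (-s) * mS + (Leta * r powr (1 - \<beta>)) * (Cinner (s - \<beta>) * r powr (s - (s - \<beta>))) + 0 * 0"
  have K0: "0 \<le> K0" unfolding K0_def using Meta_nonneg Leta_nonneg mS(2) Cinner_pos[of "s - \<beta>"] \<beta> by auto
  have wle: "w (z, y) \<le> indicator S z * (Meta * r powr (-s) * indicator S y + (Leta * r powr (1 - \<beta>)) * (indicator (ball z r) y * dist z y powr (-(s - \<beta>))))" for z y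
  proof (cases "\<eta> z * \<phi> y - \<eta> y * \<phi> z = 0")
    case True then show ?thesis unfolding w_def using Meta_nonneg Leta_nonneg by (simp add: indicator_def)
  next
    case False
    then have "\<eta> z * \<phi> y \<noteq> 0 \<or> \<eta> y * \<phi> z \<noteq> 0" by auto
    then have zS: "z \<in> S" and yS: "y \<in> S" using etaS suppS by auto
    have zy: "z \<noteq> y" using False by (auto simp: mult.commute)
    have dpos: "0 < dist z y" using zy by simp
    have ab: "\<bar>\<eta> z * \<phi> y - \<eta> y * \<phi> z\<bar> \<le> Meta"
    proof -
      have "0 \<le> \<eta> z * \<phi> y" "\<eta> z * \<phi> y \<le> Meta" "0 \<le> \<eta> y * \<phi> z" "\<eta> y * \<phi> z \<le> Meta"
        using eta_nonneg[of z] eta_nonneg[of y] eta_le[of z] eta_le[of y] P(2,3)[of y] P(2,3)[of z]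
        by (auto intro: mult_nonneg_nonneg mult_le_one order_trans[OF mult_left_le])
      then show ?thesis by linarith
    qed
    show ?thesis
    proof (cases "r \<le> dist z y")
      case True
      have "dist z y powr (-s) \<le> r powr (-s)" using True P0(1) s_pos by (intro powr_mono2') auto
      then have "(1/2) * \<bar>\<eta> z * \<phi> y - \<eta> y * \<phi> z\<bar> * dist z y powr (-s) \<le> 1 * Meta * r powr (-s)"
        using ab by (intro mult_mono) auto
      then show ?thesis unfolding w_def using zS yS Leta_nonneg \<open>r \<le> dist z y\<close> by (simp add: indicator_def)
    next
      case False
      then have dr: "dist z y < r" by simp
      have lip: "\<bar>\<eta> z * \<phi> y - \<eta> y * \<phi> z\<bar> \<le> Leta * dist z y"
      proof (cases "\<eta> z = 0 \<and> \<eta> y = 0")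
        case True then show ?thesis using Leta_nonneg by simp
      next
        case False
        then obtain u where u: "\<eta> u \<noteq> 0" "u = z \<or> u = y" by blast
        then have "u \<in> ball c r" using eta_suppB P0(4) by blast
        moreover have "dist u z < r" "dist u y < r" using u dr P0(1) by (auto simp: dist_commute)
        ultimately have "z \<in> ball c (2 * r)" "y \<in> ball c (2 * r)" 
          using dist_triangle[of c z u] dist_triangle[of c y u] by auto
        then have "\<phi> z = 1" "\<phi> y = 1" using P0(2) by auto
        then show ?thesis using eta_lipD[of z y] by simp
      qed
      have "(1/2) * \<bar>\<eta> z * \<phi> y - \<eta> y * \<phi> z\<bar> * dist z y powr (-s) \<le> Leta * dist z y * dist z y powr (-s)"
        using lip by (intro mult_right_mono) auto
      also have "Leta * dist z y * dist z y powr (-s) = Leta * (dist z y powr (1 - \<beta>) * dist z y powr (-(s - \<beta>)))"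
      proof -
        have "dist z y * dist z y powr (-s) = dist z y powr (-s + 1)"
          using powr_mult_self[OF dpos, of "-s"] by (simp add: mult.commute)
        also have "-s + 1 = (1 - \<beta>) + (-(s - \<beta>))" by simp
        also have "dist z y powr ((1 - \<beta>) + (-(s - \<beta>))) = dist z y powr (1 - \<beta>) * dist z y powr (-(s - \<beta>))"
          by (rule powr_add)
        finally show ?thesis by simp
      qed
      also have "\<dots> \<le> Leta * (r powr (1 - \<beta>) * dist z y powr (-(s - \<beta>)))"
        using Leta_nonneg dr dpos \<beta> by (intro mult_left_mono mult_right_mono powr_mono2) auto
      finally have X: "(1/2) * \<bar>\<eta> z * \<phi> y - \<eta> y * \<phi> z\<bar> * dist z y powr (-s) \<le> Leta * (r powr (1 - \<beta>) * dist z y powr (-(s - \<beta>)))" .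
      have nn: "0 \<le> Meta * r powr (-s)" using Meta_nonneg by simp
      have "w (z, y) = (1/2) * \<bar>\<eta> z * \<phi> y - \<eta> y * \<phi> z\<bar> * dist z y powr (-s)" by (simp add: w_def)
      moreover have "indicator S z * (Meta * r powr (-s) * indicator S y + (Leta * r powr (1 - \<beta>)) * (indicator (ball z r) y * dist z y powr (-(s - \<beta>))))
          = Meta * r powr (-s) + Leta * (r powr (1 - \<beta>) * dist z y powr (-(s - \<beta>)))"
        using zS yS dr by (simp add: indicator_def mult_ac)
      ultimately show ?thesis using X nn by linarith
    qed
  qed
  have wint: "integrable (\<mu> \<Otimes>\<^sub>M \<mu>) w"
  proof (rule integrableI_bounded)
    have "(\<integral>\<^sup>+p. ennreal (norm (w p)) \<partial>(\<mu> \<Otimes>\<^sub>M \<mu>)) = (\<integral>\<^sup>+z. (\<integral>\<^sup>+y. ennreal (w (z, y)) \<partial>\<mu>) \<partial>\<mu>)"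
    proof -
      have "(\<lambda>p. ennreal (norm (w p))) = (\<lambda>p. ennreal (w p))" by (auto simp: w_def fun_eq_iff)
      then show ?thesis using sf.nn_integral_fst[of "\<lambda>p. ennreal (w p)" \<mu>] by simp
    qed
    also have "\<dots> \<le> (\<integral>\<^sup>+z. ennreal (K0) * indicator S z \<partial>\<mu>)"
    proof (rule nn_integral_mono)
      fix z
      show "(\<integral>\<^sup>+y. ennreal (w (z, y)) \<partial>\<mu>) \<le> ennreal K0 * indicator S z"
      proof (cases "z \<in> S")
        case False
        have "w (z, y) = 0" for y
        proof -
          have "w (z, y) \<le> 0" using wle[of z y] False by simp
          moreover have "0 \<le> w (z, y)" by (simp add: w_def)
          ultimately show ?thesis by simp
        qed
        then show ?thesis by simp
      next
        case True
        have "(\<integral>\<^sup>+y. ennreal (w (z, y)) \<partial>\<mu>) \<le> ennreal K0" unfolding K0_def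
        proof (rule nn3[where gc="\<lambda>_. 0"])
          fix y show "w (z, y) \<le> (Meta * r powr (-s)) * indicator S y + (Leta * r powr (1 - \<beta>)) * (indicator (ball z r) y * dist z y powr (-(s - \<beta>))) + 0 * 0"
            using wle[of z y] True by simp
          show "(\<integral>\<^sup>+y. ennreal (indicator S y) \<partial>\<mu>) \<le> ennreal mS"
            using mS by (simp add: ennreal_indicator sets_mu)
          show "(\<integral>\<^sup>+y. ennreal (indicator (ball z r) y * dist z y powr (-(s - \<beta>))) \<partial>\<mu>) \<le> ennreal (Cinner (s - \<beta>) * r powr (s - (s - \<beta>)))"
            using inner[OF P0(1), of "s - \<beta>" z] \<beta> by simp
        qed (use Meta_nonneg Leta_nonneg mS(2) Cinner_pos[of "s - \<beta>"] \<beta> P0(1) in auto)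
        then show ?thesis using True by simp
      qed
    qed
    also have "\<dots> = ennreal K0 * emeasure \<mu> S" by (simp add: sets_mu nn_integral_cmult_indicator)
    also have "\<dots> < \<infinity>" using Sf by (simp add: ennreal_mult_less_top)
    finally show "(\<integral>\<^sup>+p. ennreal (norm (w p)) \<partial>(\<mu> \<Otimes>\<^sub>M \<mu>)) < \<infinity>" .
  qed simp
  have bound: "norm (W \<delta> p) \<le> w p" if "0 < \<delta>" for \<delta> p
  proof -
    obtain z y where p: "p = (z, y)" by (cases p)
    have k: "norm (Kd \<Omega> s \<delta> (z - y)) \<le> dist z y powr (-s)"
    proof (cases "z = y")
      case False
      have "norm (Kd \<Omega> s \<delta> (z - y)) \<le> max \<delta> (norm (z - y)) powr (-s)" by (rule Kd_norm[OF that])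
      also have "\<dots> \<le> norm (z - y) powr (-s)" using False s_pos by (intro powr_mono2') auto
      finally show ?thesis by (simp add: dist_norm)
    qed simp
    show ?thesis unfolding p W_def w_def using k by (simp add: mult_left_mono)
  qed
  have conv: "((\<lambda>\<delta>. W \<delta> p) \<longlongrightarrow> W0 p) (at_right 0)" for p
  proof -
    obtain z y where p: "p = (z, y)" by (cases p)
    show ?thesis
    proof (cases "z = y")
      case True then show ?thesis unfolding p W_def W0_def by simp
    next
      case False
      then have "0 < norm (z - y)" by simp
      then have "eventually (\<lambda>\<delta>. \<delta> \<in> {0<..<norm (z - y)}) (at_right 0)" by (rule eventually_at_right_real)
      then have "eventually (\<lambda>\<delta>. \<delta> < norm (z - y)) (at_right 0)" by (rule eventually_mono) auto
      then have "eventually (\<lambda>\<delta>. W \<delta> p = W0 p) (at_right 0)"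
        by eventually_elim (simp add: p W_def W0_def Kd_eq_Ker)
      then show ?thesis by (rule tendsto_eventually)
    qed
  qed
  have lim: "((\<lambda>t. integral\<^sup>L (\<mu> \<Otimes>\<^sub>M \<mu>) (W (inverse t))) \<longlongrightarrow> integral\<^sup>L (\<mu> \<Otimes>\<^sub>M \<mu>) W0) at_top"
  proof (rule integral_dominated_convergence_at_top[where w=w])
    show "AE p in \<mu> \<Otimes>\<^sub>M \<mu>. ((\<lambda>t. W (inverse t) p) \<longlongrightarrow> W0 p) at_top"
      using conv unfolding filterlim_at_right_to_top by simp
    have "eventually (\<lambda>t::real. 0 < t) at_top" by (rule eventually_gt_at_top)
    then show "\<forall>\<^sub>F t in at_top. AE p in \<mu> \<Otimes>\<^sub>M \<mu>. norm (W (inverse t) p) \<le> w p"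
      by eventually_elim (intro AE_I2 bound, simp)
  qed (use wint in simp_all)
  then have "((\<lambda>\<delta>. integral\<^sup>L (\<mu> \<Otimes>\<^sub>M \<mu>) (W \<delta>)) \<longlongrightarrow> integral\<^sup>L (\<mu> \<Otimes>\<^sub>M \<mu>) W0) (at_right 0)"
    unfolding filterlim_at_right_to_top .
  moreover have "eventually (\<lambda>\<delta>. integral\<^sup>L (\<mu> \<Otimes>\<^sub>M \<mu>) (W \<delta>) = gfun \<phi> \<delta>) (at_right 0)"
    by (rule eventually_mono[OF eventually_at_right_less]) (simp add: step1)
  ultimately have "(gfun \<phi> \<longlongrightarrow> integral\<^sup>L (\<mu> \<Otimes>\<^sub>M \<mu>) W0) (at_right 0)"
    by (rule Lim_transform_eventually)
  then show ?thesis by blast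
qed

lemma final_est:
  assumes p1: "phi_adm \<mu> B' x B1 \<phi>1" and p2: "phi_adm \<mu> B' x' B2 \<phi>2" and d: "0 < \<delta>"
  shows "norm (Ttilde \<Omega> s \<mu> \<eta> \<delta> \<phi>1 x - Ttilde \<Omega> s \<mu> \<eta> \<delta> \<phi>2 x') \<le> Cmain * Ef \<delta> (norm (x - x'))"
proof -
  define cD where "cD = (\<integral>y. (\<phi>1 y - \<phi>2 y) *\<^sub>R Q y \<partial>\<mu>)"
  obtain l1 where l1: "(gfun \<phi>1 \<longlongrightarrow> l1) (at_right 0)" using P_conv[OF p1] by blast
  obtain r0 where r0: "0 < r0" "\<And>\<delta>. 0 < \<delta> \<Longrightarrow> \<delta> < r0 \<Longrightarrow> gfun \<phi>1 \<delta> - gfun \<phi>2 \<delta> = cD"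
    using P_diff[OF p1 p2] unfolding cD_def by blast
  have ev: "eventually (\<lambda>\<delta>. gfun \<phi>1 \<delta> - cD = gfun \<phi>2 \<delta>) (at_right 0)"
  proof -
    have "eventually (\<lambda>\<delta>. \<delta> \<in> {0<..<r0}) (at_right 0)" using r0(1) by (rule eventually_at_right_real)
    then show ?thesis by (rule eventually_mono) (use r0(2) in force)
  qed
  have l2: "(gfun \<phi>2 \<longlongrightarrow> l1 - cD) (at_right 0)"
    using Lim_transform_eventually[OF tendsto_diff[OF l1 tendsto_const] ev] .
  have PP: "TmuPair \<Omega> s \<mu> \<phi>1 \<eta> - TmuPair \<Omega> s \<mu> \<phi>2 \<eta> = cD"
    unfolding TmuPair_gfun using tendsto_Lim[OF trivial_limit_at_right_real l1] tendsto_Lim[OF trivial_limit_at_right_real l2]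
    by simp
  define F1 where "F1 y = Kd \<Omega> s \<delta> (x - y) - (1 - \<phi>1 y) *\<^sub>R Q y" for y
  define F2 where "F2 y = Kd \<Omega> s \<delta> (x' - y) - (1 - \<phi>2 y) *\<^sub>R Q y" for y
  define KK where "KK y = Kd \<Omega> s \<delta> (x - y) - Kd \<Omega> s \<delta> (x' - y)" for y
  have i1: "integrable \<mu> F1" unfolding F1_def by (rule F_int[OF p1 d])
  have i2: "integrable \<mu> F2" unfolding F2_def by (rule F_int[OF p2 d])
  have i3: "integrable \<mu> (\<lambda>y. (\<phi>1 y - \<phi>2 y) *\<^sub>R Q y)" by (rule DQ_int[OF p1 p2])
  have KKe: "KK = (\<lambda>y. F1 y - F2 y - (\<phi>1 y - \<phi>2 y) *\<^sub>R Q y)"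
    by (rule ext) (simp add: KK_def F1_def F2_def algebra_simps)
  have iK: "integrable \<mu> KK" unfolding KKe
    by (intro Bochner_Integration.integrable_diff i1 i2 i3)
  have "Ttilde \<Omega> s \<mu> \<eta> \<delta> \<phi>1 x - Ttilde \<Omega> s \<mu> \<eta> \<delta> \<phi>2 x' = (integral\<^sup>L \<mu> F1 - integral\<^sup>L \<mu> F2) - cD"
    unfolding T3[OF p1 d] T3[OF p2 d] F1_def[symmetric] F2_def[symmetric] using PP
    by (simp add: algebra_simps)
  also have "integral\<^sup>L \<mu> F1 - integral\<^sup>L \<mu> F2 - cD = integral\<^sup>L \<mu> KK"
    unfolding KKe cD_def
    using Bochner_Integration.integral_diff[OF Bochner_Integration.integrable_diff[OF i1 i2] i3]
      Bochner_Integration.integral_diff[OF i1 i2] by simp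
  finally have eq: "Ttilde \<Omega> s \<mu> \<eta> \<delta> \<phi>1 x - Ttilde \<Omega> s \<mu> \<eta> \<delta> \<phi>2 x' = integral\<^sup>L \<mu> KK" .
  have "ennreal (norm (integral\<^sup>L \<mu> KK)) \<le> (\<integral>\<^sup>+y. ennreal (norm (KK y)) \<partial>\<mu>)"
    by (rule integral_norm_bound_ennreal[OF iK])
  also have "\<dots> \<le> ennreal (Cmain * Ef \<delta> (norm (x - x')))" unfolding KK_def by (rule main_est[OF d])
  finally have "norm (integral\<^sup>L \<mu> KK) \<le> Cmain * Ef \<delta> (norm (x - x'))"
  proof -
    assume h: "ennreal (norm (integral\<^sup>L \<mu> KK)) \<le> ennreal (Cmain * Ef \<delta> (norm (x - x')))"
    have "0 \<le> Ef \<delta> (norm (x - x'))" using Ef_ge1[OF d, of "norm (x - x')"] by (meson order_trans powr_ge_zero norm_ge_zero)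
    then have "0 \<le> Cmain * Ef \<delta> (norm (x - x'))" using Cmain_pos by simp
    then show ?thesis using h by (simp add: ennreal_le_iff)
  qed
  then show ?thesis unfolding eq .
qed


end


definition Cg :: "real \<Rightarrow> real \<Rightarrow> real \<Rightarrow> real" where
  "Cg s \<alpha> \<Lambda> = (8 + (s + 1) * 2 powr (s + 3)) * (\<Lambda> + \<Lambda> * 2 powr s / (1 - 2 powr (s - (s + \<alpha>))))
    + 4 * ((8 + (s + 1) * 2 powr (s + 3)) * (\<Lambda> * 2 powr s / (1 - 2 powr (s - (s + \<alpha>)))) + 2 * \<Lambda>
       + 6 * (\<Lambda> * 2 powr (max (s - 1) (s / 2)) / (1 - 2 powr (max (s - 1) (s / 2) - s))))"

lemma (in nicem) Cmain_Cg: "Cmain = Cg s \<alpha> \<Lambda>"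
  unfolding Cmain_def Cg_def CH_def Ctail_def Cinner_def pn_def ..

lemma Cg_pos:
  assumes "0 < s" "0 < \<alpha>" "0 < \<Lambda>"
  shows "0 < Cg s \<alpha> \<Lambda>"
proof -
  have a: "(2::real) powr (s - (s + \<alpha>)) < 1" using assms powr_less_mono[of "s - (s + \<alpha>)" 0 "2::real"] by simp
  have b: "(2::real) powr (max (s - 1) (s / 2) - s) < 1" using assms powr_less_mono[of "max (s - 1) (s / 2) - s" 0 "2::real"] by simp
  have c: "0 < 8 + (s + 1) * 2 powr (s + 3)" using assms by (simp add: add_pos_nonneg)
  show ?thesis unfolding Cg_def using a b c assms
    by (intro add_pos_pos mult_pos_pos add_pos_nonneg divide_pos_pos mult_nonneg_nonneg divide_nonneg_pos) auto
qed

theorem lemma6p1: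
  fixes s \<alpha> \<Lambda> :: real
  assumes "CARD('n) \<ge> 2" and "0 < s" and "s < real CARD('n)"
    and "0 < \<alpha>" and "\<alpha> \<le> 1" and "0 < \<Lambda>"
  shows "\<exists>C>0. \<forall>(\<Omega>::real^'n \<Rightarrow> complex^'m) \<mu> B' \<eta> \<delta> x x' B1 \<phi>1 B2 \<phi>2.
     omega_adm \<alpha> \<Omega> \<and> good \<Omega> s \<Lambda> \<mu> \<and> emeasure \<mu> UNIV \<noteq> 0 \<and> eta_adm \<mu> B' \<eta> \<and> 0 < \<delta>
     \<and> phi_adm \<mu> B' x B1 \<phi>1 \<and> phi_adm \<mu> B' x' B2 \<phi>2 \<longrightarrow>
     norm (Ttilde \<Omega> s \<mu> \<eta> \<delta> \<phi>1 x - Ttilde \<Omega> s \<mu> \<eta> \<delta> \<phi>2 x')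
       \<le> C * norm (x - x') powr \<alpha> / \<delta> powr \<alpha> * max 1 (norm (x - x') / \<delta>) powr (1 - \<alpha>)"
proof (intro exI[of _ "Cg s \<alpha> \<Lambda>"] conjI allI impI)
  show "0 < Cg s \<alpha> \<Lambda>" using assms by (intro Cg_pos) auto
  fix \<Omega> :: "real^'n \<Rightarrow> complex^'m" and \<mu> :: "(real^'n) measure" and B' :: "(real^'n) set"
    and \<eta> :: "real^'n \<Rightarrow> real" and \<delta> :: real and x x' :: "real^'n" and B1 B2 :: "(real^'n) set"
    and \<phi>1 \<phi>2 :: "real^'n \<Rightarrow> real"
  assume H: "omega_adm \<alpha> \<Omega> \<and> good \<Omega> s \<Lambda> \<mu> \<and> emeasure \<mu> UNIV \<noteq> 0 \<and> eta_adm \<mu> B' \<eta> \<and> 0 < \<delta>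
     \<and> phi_adm \<mu> B' x B1 \<phi>1 \<and> phi_adm \<mu> B' x' B2 \<phi>2"
  then have nice: "nice s \<Lambda> \<mu>" by (simp add: good_def)
  interpret S: setting \<Omega> s \<alpha> \<mu> \<Lambda> \<eta> B'
  proof
    show "omega_adm \<alpha> \<Omega>" using H by blast
    show "sets \<mu> = sets borel" using nice by (simp add: nice_def)
    show "\<And>x r. 0 < r \<Longrightarrow> emeasure \<mu> (ball x r) \<le> ennreal (\<Lambda> * r powr s)" using nice by (simp add: nice_def)
    show "eta_adm \<mu> B' \<eta>" using H by blast
  qed (use assms in auto)
  have "norm (Ttilde \<Omega> s \<mu> \<eta> \<delta> \<phi>1 x - Ttilde \<Omega> s \<mu> \<eta> \<delta> \<phi>2 x') \<le> S.Cmain * S.Ef \<delta> (norm (x - x'))"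
    using H by (intro S.final_est) auto
  then show "norm (Ttilde \<Omega> s \<mu> \<eta> \<delta> \<phi>1 x - Ttilde \<Omega> s \<mu> \<eta> \<delta> \<phi>2 x')
       \<le> Cg s \<alpha> \<Lambda> * norm (x - x') powr \<alpha> / \<delta> powr \<alpha> * max 1 (norm (x - x') / \<delta>) powr (1 - \<alpha>)"
    unfolding S.Cmain_Cg S.Ef_def by (simp add: mult.assoc)
qed


end
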